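(* (i) The pair $(\leq_{\boldsymbol\Sigma^1_1},\not\subseteq_{\boldsymbol\Sigma^1_1})$ on $\mathfrak T$ is complete for the class $\mathcal C_{\rm qo}$ of analytic quasiorders on standard Borel spaces. (ii) The pair $(\equiv_{\boldsymbol\Sigma^1_1},\mathrm{Disj}_{\boldsymbol\Sigma^1_1})$ on $\mathfrak T$ is complete for the class $\mathcal C_{\rm eq}$ of analytic equivalence relations on standard Borel spaces. Consequently the pair $(\equiv_{\boldsymbol\Sigma^1_1},\neq_{\boldsymbol\Sigma^1_1})$ is also complete for $\mathcal C_{\rm eq}$.
   Context: For finite sequences $s,t\in\omega^{<\omega}$, $s\le t$ means $|s|=|t|$ and $s(i)\le t(i)$ for all $i<|s|$; for $|s|=|t|$, $(s+t)(i)=s(i)+t(i)$. A normal tree on $2\times\omega$ is a set $T$ of pairs $(u,s)\in 2^{<\omega}\times\omega^{<\omega}$ with $|u|=|s|$, containing $(\emptyset,\emptyset)$, closed under taking initial segments (in both coordinates simultaneously), and such that $(u,s)\in T$ and $s\le t$ imply $(u,t)\in T$. $\mathfrak T$ denotes the set of normal trees, a closed (compact Polish) subset of $2^{(2\times\omega)^{<\omega}}$. For $T\in\mathfrak T$, $A(T)=\{\alpha\in 2^\omega:\exists\beta\in\omega^\omega\,\forall n\,(\alpha|_n,\beta|_n)\in T\}$. Relations on $\mathfrak T$: $S\le_{\boldsymbol\Sigma^1_1}T$ iff $\exists\alpha\in\omega^\omega\,\forall(u,s)\,((u,s)\in S\Rightarrow (u,s+\alpha|_{|s|})\in T)$; $S\equiv_{\boldsymbol\Sigma^1_1}T$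 iff $S\le_{\boldsymbol\Sigma^1_1}T$ and $T\le_{\boldsymbol\Sigma^1_1}S$; $S\not\subseteq_{\boldsymbol\Sigma^1_1}T$ iff $A(S)\not\subseteq A(T)$; $S\,\mathrm{Disj}_{\boldsymbol\Sigma^1_1}T$ iff $A(S)\ne\emptyset$, $A(T)\neq\emptyset$ and $A(S)\cap A(T)=\emptyset$; $S\neq_{\boldsymbol\Sigma^1_1}T$ iff $A(S)\ne A(T)$. For pairs $(R_1,R_2)$ of binary relations on a standard Borel space $X$ and $(S_1,S_2)$ on $Y$, a Borel homomorphism is a Borel $f:X\to Y$ with $xR_1y\Rightarrow f(x)S_1f(y)$ and $xR_2y\Rightarrow f(x)S_2f(y)$. A binary relation $R$ is identified with the pair $(R,\neg R)$. For a class $\mathcal C$ of binary relations on standard Borel spaces, a pair $(R_1,R_2)$ is $\mathcal C$-complete if (a) for every $R\in\mathcal C$ there is a Borel homomorphism from $(R,\neg R)$ to $(R_1,R_2)$, and (b) there is some $R\in\mathcal C$ and a Borel homomorphism from $(R_1,R_2)$ to $(R,\neg R)$. *)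

theory Defs
  imports "HOL-Analysis.Analysis"
begin

definition standard_borel :: "'a measure \<Rightarrow> bool" where
  "standard_borel M \<longleftrightarrow>
     (\<exists>X. completely_metrizable_space X \<and> separable_space X \<and> topspace X = space M \<and>
          sets M = sigma_sets (space M) {U. openin X U})"

definition analytic_set :: "'a measure \<Rightarrow> 'a set \<Rightarrow> bool" where
  "analytic_set M A \<longleftrightarrow> A \<subseteq> space M \<and>
     (A = {} \<or> (\<exists>f. f \<in> measurable (borel :: (nat \<Rightarrow> nat) measure) M \<and> range f = A))"

definition rel_graph :: "'a measure \<Rightarrow> ('a \<Rightarrow> 'a \<Rightarrow> bool) \<Rightarrow> ('a \<times> 'a) set" where
  "rel_graph M R = {(x, y). x \<in> space M \<and> y \<in> space M \<and> R x y}"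

definition analytic_rel :: "'a measure \<Rightarrow> ('a \<Rightarrow> 'a \<Rightarrow> bool) \<Rightarrow> bool" where
  "analytic_rel M R \<longleftrightarrow> analytic_set (M \<Otimes>\<^sub>M M) (rel_graph M R)"

definition quasiorder_on :: "'a set \<Rightarrow> ('a \<Rightarrow> 'a \<Rightarrow> bool) \<Rightarrow> bool" where
  "quasiorder_on X R \<longleftrightarrow> (\<forall>x\<in>X. R x x) \<and>
     (\<forall>x\<in>X. \<forall>y\<in>X. \<forall>z\<in>X. R x y \<longrightarrow> R y z \<longrightarrow> R x z)"

definition equivalence_on :: "'a set \<Rightarrow> ('a \<Rightarrow> 'a \<Rightarrow> bool) \<Rightarrow> bool" where
  "equivalence_on X R \<longleftrightarrow> quasiorder_on X R \<and> (\<forall>x\<in>X. \<forall>y\<in>X. R x y \<longrightarrow> R y x)"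

definition C_qo :: "'a measure \<Rightarrow> ('a \<Rightarrow> 'a \<Rightarrow> bool) \<Rightarrow> bool" where
  "C_qo M R \<longleftrightarrow> standard_borel M \<and> quasiorder_on (space M) R \<and> analytic_rel M R"

definition C_eq :: "'a measure \<Rightarrow> ('a \<Rightarrow> 'a \<Rightarrow> bool) \<Rightarrow> bool" where
  "C_eq M R \<longleftrightarrow> standard_borel M \<and> equivalence_on (space M) R \<and> analytic_rel M R"

definition borel_hom ::
  "'a measure \<Rightarrow> ('a \<Rightarrow> 'a \<Rightarrow> bool) \<Rightarrow> ('a \<Rightarrow> 'a \<Rightarrow> bool) \<Rightarrow>
   'b measure \<Rightarrow> ('b \<Rightarrow> 'b \<Rightarrow> bool) \<Rightarrow> ('b \<Rightarrow> 'b \<Rightarrow> bool) \<Rightarrow> ('a \<Rightarrow> 'b) \<Rightarrow> bool" where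
  "borel_hom X R1 R2 Y S1 S2 f \<longleftrightarrow> f \<in> measurable X Y \<and>
     (\<forall>x\<in>space X. \<forall>y\<in>space X. (R1 x y \<longrightarrow> S1 (f x) (f y)) \<and> (R2 x y \<longrightarrow> S2 (f x) (f y)))"

type_synonym tree = "(bool list \<times> nat list) set"

definition seq_le :: "nat list \<Rightarrow> nat list \<Rightarrow> bool" where
  "seq_le s t \<longleftrightarrow> length s = length t \<and> (\<forall>i<length s. s ! i \<le> t ! i)"

definition normal_tree :: "tree \<Rightarrow> bool" where
  "normal_tree T \<longleftrightarrow>
     ([], []) \<in> T \<and>
     (\<forall>u s. (u, s) \<in> T \<longrightarrow> length u = length s) \<and>
     (\<forall>u s n. (u, s) \<in> T \<longrightarrow> (take n u, take n s) \<in> T) \<and>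
     (\<forall>u s t. (u, s) \<in> T \<longrightarrow> seq_le s t \<longrightarrow> (u, t) \<in> T)"

definition NTrees :: "tree set" where
  "NTrees = {T. normal_tree T}"

text \<open>The space of normal trees with the Borel structure inherited from the product
(Cantor) topology on 2^((2 x omega)^<omega): generated by the evaluation sets.\<close>
definition Tspace :: "tree measure" where
  "Tspace = sigma NTrees {{T \<in> NTrees. p \<in> T} | p. True}"

definition restr :: "(nat \<Rightarrow> 'x) \<Rightarrow> nat \<Rightarrow> 'x list" where
  "restr \<alpha> n = map \<alpha> [0..<n]"

definition A_of :: "tree \<Rightarrow> (nat \<Rightarrow> bool) set" where
  "A_of T = {\<alpha>. \<exists>\<beta> :: nat \<Rightarrow> nat. \<forall>n. (restr \<alpha> n, restr \<beta> n) \<in> T}"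

definition seq_add :: "nat list \<Rightarrow> nat list \<Rightarrow> nat list" where
  "seq_add s t = map (\<lambda>i. s ! i + t ! i) [0..<length s]"

definition le_S :: "tree \<Rightarrow> tree \<Rightarrow> bool" where
  "le_S S T \<longleftrightarrow> (\<exists>\<alpha> :: nat \<Rightarrow> nat. \<forall>u s. (u, s) \<in> S \<longrightarrow> (u, seq_add s (restr \<alpha> (length s))) \<in> T)"

definition eq_S :: "tree \<Rightarrow> tree \<Rightarrow> bool" where
  "eq_S S T \<longleftrightarrow> le_S S T \<and> le_S T S"

definition nsub_S :: "tree \<Rightarrow> tree \<Rightarrow> bool" where
  "nsub_S S T \<longleftrightarrow> \<not> (A_of S \<subseteq> A_of T)"

definition disj_S :: "tree \<Rightarrow> tree \<Rightarrow> bool" where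
  "disj_S S T \<longleftrightarrow> A_of S \<noteq> {} \<and> A_of T \<noteq> {} \<and> A_of S \<inter> A_of T = {}"

definition neq_S :: "tree \<Rightarrow> tree \<Rightarrow> bool" where
  "neq_S S T \<longleftrightarrow> A_of S \<noteq> A_of T"

text \<open>Clause (a) quantifies over all types (the type variable is universally
quantified at theorem level); clause (b) asks for a witness space carried by a subset
of the type tree (which has continuum cardinality, so every standard Borel space is
isomorphic to one of these).\<close>
definition complete_a ::
  "('a measure \<Rightarrow> ('a \<Rightarrow> 'a \<Rightarrow> bool) \<Rightarrow> bool) \<Rightarrow> (tree \<Rightarrow> tree \<Rightarrow> bool) \<Rightarrow> (tree \<Rightarrow> tree \<Rightarrow> bool) \<Rightarrow> bool" where
  "complete_a C R1 R2 \<longleftrightarrow> (\<forall>M R. C M R \<longrightarrow>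
      (\<exists>f. borel_hom M R (\<lambda>x y. \<not> R x y) Tspace R1 R2 f))"

definition complete_b ::
  "(tree measure \<Rightarrow> (tree \<Rightarrow> tree \<Rightarrow> bool) \<Rightarrow> bool) \<Rightarrow> (tree \<Rightarrow> tree \<Rightarrow> bool) \<Rightarrow> (tree \<Rightarrow> tree \<Rightarrow> bool) \<Rightarrow> bool" where
  "complete_b C R1 R2 \<longleftrightarrow> (\<exists>M R. C M R \<and>
      (\<exists>g. borel_hom Tspace R1 R2 M R (\<lambda>x y. \<not> R x y) g))"

end

theory Submission
  imports Defs
begin


definition cl :: "((nat \<Rightarrow> 'x) \<Rightarrow> bool) \<Rightarrow> bool" where
  "cl \<Phi> \<longleftrightarrow> (\<forall>f. (\<forall>n. \<exists>g. \<Phi> g \<and> (\<forall>i<n. g i = f i)) \<longrightarrow> \<Phi> f)"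

lemma clI: "(\<And>f. (\<And>n. \<exists>g. \<Phi> g \<and> (\<forall>i<n. g i = f i)) \<Longrightarrow> \<Phi> f) \<Longrightarrow> cl \<Phi>"
  unfolding cl_def by blast

lemma clD: "cl \<Phi> \<Longrightarrow> (\<And>n. \<exists>g. \<Phi> g \<and> (\<forall>i<n. g i = f i)) \<Longrightarrow> \<Phi> f"
  unfolding cl_def by blast

lemma cl_all: "(\<And>k. cl (\<Phi> k)) \<Longrightarrow> cl (\<lambda>f. \<forall>k. \<Phi> k f)"
  unfolding cl_def by metis

lemma cl_conj: "cl \<Phi> \<Longrightarrow> cl \<Psi> \<Longrightarrow> cl (\<lambda>f. \<Phi> f \<and> \<Psi> f)"
  unfolding cl_def by metis

lemma cl_const: "cl (\<lambda>f. P)"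
  unfolding cl_def by auto

lemma cl_coord: "cl (\<lambda>f. P (f i))"
proof (rule clI)
  fix f :: "nat \<Rightarrow> 'a"
  assume "\<And>n. \<exists>g. P (g i) \<and> (\<forall>j<n. g j = f j)"
  from this[of "Suc i"] show "P (f i)" by auto
qed

lemma cl_imp_coord:
  assumes "cl \<Phi>" shows "cl (\<lambda>f. P (f i) \<longrightarrow> \<Phi> f)"
proof (rule clI)
  fix f :: "nat \<Rightarrow> 'a"
  assume A: "\<And>n. \<exists>g. (P (g i) \<longrightarrow> \<Phi> g) \<and> (\<forall>j<n. g j = f j)"
  show "P (f i) \<longrightarrow> \<Phi> f"
  proof
    assume P: "P (f i)"
    show "\<Phi> f"
    proof (rule clD[OF assms])
      fix n
      obtain g where g: "(P (g i) \<longrightarrow> \<Phi> g)" "\<forall>j<max n (Suc i). g j = f j"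
        using A by blast
      then have "g i = f i" by auto
      with g P show "\<exists>g. \<Phi> g \<and> (\<forall>i<n. g i = f i)" by auto
    qed
  qed
qed

lemma cl_pull:
  assumes "cl \<Phi>"
    and "\<And>n. \<exists>L. \<forall>f g. (\<forall>i<L. f i = g i) \<longrightarrow> (\<forall>i<n. F f i = F g i)"
  shows "cl (\<lambda>f. \<Phi> (F f))"
proof (rule clI)
  fix f
  assume A: "\<And>n. \<exists>g. \<Phi> (F g) \<and> (\<forall>i<n. g i = f i)"
  show "\<Phi> (F f)"
  proof (rule clD[OF assms(1)])
    fix n
    obtain L where L: "\<forall>f g. (\<forall>i<L. f i = g i) \<longrightarrow> (\<forall>i<n. F f i = F g i)"
      using assms(2) by blast
    obtain g where "\<Phi> (F g)" "\<forall>i<L. g i = f i" using A by blast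
    with L show "\<exists>g. \<Phi> g \<and> (\<forall>i<n. g i = F f i)" by blast
  qed
qed

definition Sus :: "(nat \<Rightarrow> nat) set \<Rightarrow> bool" where
  "Sus B \<longleftrightarrow> (\<exists>\<Phi>. cl \<Phi> \<and> B = {\<beta>. \<exists>\<gamma>. \<Phi> (\<lambda>n. (\<beta> n, \<gamma> n :: nat))})"

lemma Sus_const: "Sus {}" "Sus UNIV"
  unfolding Sus_def
  by (rule exI[of _ "\<lambda>_. False"], simp add: cl_const)
     (rule exI[of _ "\<lambda>_. True"], simp add: cl_const)

lemma Sus_coord: "Sus {\<beta>. P (\<beta> i)}"
  unfolding Sus_def
  by (rule exI[of _ "\<lambda>z. P (fst (z i))"], simp add: cl_coord[of "\<lambda>x. P (fst x)"])

lemma Sus_union: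
  assumes "\<And>k::nat. Sus (B k)" shows "Sus (\<Union>k. B k)"
proof -
  from assms obtain \<Phi> where \<Phi>: "\<And>k. cl (\<Phi> k)"
    "\<And>k. B k = {\<beta>. \<exists>\<gamma>. \<Phi> k (\<lambda>n. (\<beta> n, \<gamma> n :: nat))}"
    unfolding Sus_def by metis
  define \<Psi> where "\<Psi> z = (\<forall>k. snd (z 0) = k \<longrightarrow> \<Phi> k (\<lambda>m. (fst (z m), snd (z (Suc m)))))"
    for z :: "nat \<Rightarrow> nat \<times> nat"
  have "cl \<Psi>"
    unfolding \<Psi>_def
  proof (intro cl_all cl_imp_coord cl_pull[OF \<Phi>(1)])
    fix n
    show "\<exists>L. \<forall>f g. (\<forall>i<L. f i = g i) \<longrightarrow>
            (\<forall>i<n. (fst (f i), snd (f (Suc i))) = (fst (g i), snd (g (Suc i))))"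
      by (rule exI[of _ "Suc n"]) auto
  qed
  moreover have "(\<Union>k. B k) = {\<beta>. \<exists>\<gamma>. \<Psi> (\<lambda>n. (\<beta> n, \<gamma> n))}"
  proof safe
    fix \<beta> k assume "\<beta> \<in> B k"
    then obtain \<gamma> where "\<Phi> k (\<lambda>n. (\<beta> n, \<gamma> n))" using \<Phi>(2) by auto
    then show "\<exists>\<gamma>. \<Psi> (\<lambda>n. (\<beta> n, \<gamma> n))"
      by (intro exI[of _ "case_nat k \<gamma>"]) (simp add: \<Psi>_def)
  next
    fix \<beta> \<gamma> assume "\<Psi> (\<lambda>n. (\<beta> n, \<gamma> n))"
    then have "\<Phi> (\<gamma> 0) (\<lambda>m. (\<beta> m, \<gamma> (Suc m)))" by (simp add: \<Psi>_def)
    then have "\<beta> \<in> B (\<gamma> 0)" using \<Phi>(2) by auto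
    then show "\<beta> \<in> (\<Union>k. B k)" by auto
  qed
  ultimately show ?thesis unfolding Sus_def by blast
qed

lemma triangle_mono: "i \<le> n \<Longrightarrow> triangle i \<le> triangle n"
  unfolding triangle_def by (intro div_le_mono mult_le_mono) auto

lemma prod_encode_mono2: "i \<le> n \<Longrightarrow> prod_encode (k, i) \<le> prod_encode (k, n)"
  unfolding prod_encode_def using triangle_mono[of "k+i" "k+n"] by auto

lemma Sus_inter:
  assumes "\<And>k::nat. Sus (B k)" shows "Sus (\<Inter>k. B k)"
proof -
  from assms obtain \<Phi> where \<Phi>: "\<And>k. cl (\<Phi> k)"
    "\<And>k. B k = {\<beta>. \<exists>\<gamma>. \<Phi> k (\<lambda>n. (\<beta> n, \<gamma> n :: nat))}"
    unfolding Sus_def by metis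
  define \<Psi> where "\<Psi> z = (\<forall>k. \<Phi> k (\<lambda>m. (fst (z m), snd (z (prod_encode (k, m))))))"
    for z :: "nat \<Rightarrow> nat \<times> nat"
  have cont: "\<exists>L. \<forall>f g :: nat \<Rightarrow> nat \<times> nat. (\<forall>i<L. f i = g i) \<longrightarrow>
            (\<forall>i<n. (fst (f i), snd (f (prod_encode (k, i)))) = (fst (g i), snd (g (prod_encode (k, i)))))"
    for n k
  proof (rule exI[of _ "Suc (prod_encode (k, n)) + n"], intro allI impI)
    fix f g :: "nat \<Rightarrow> nat \<times> nat" and i :: nat
    assume fg: "\<forall>i<Suc (prod_encode (k, n)) + n. f i = g i" and i: "i < n"
    have "prod_encode (k, i) \<le> prod_encode (k, n)" using i by (intro prod_encode_mono2) auto
    then show "(fst (f i), snd (f (prod_encode (k, i)))) = (fst (g i), snd (g (prod_encode (k, i))))"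
      using fg i by auto
  qed
  have "cl \<Psi>"
    unfolding \<Psi>_def
    by (intro cl_all cl_pull[OF \<Phi>(1)] cont)
  moreover have "(\<Inter>k. B k) = {\<beta>. \<exists>\<gamma>. \<Psi> (\<lambda>n. (\<beta> n, \<gamma> n))}"
  proof safe
    fix \<beta> assume "\<beta> \<in> (\<Inter>k. B k)"
    then have "\<forall>k. \<exists>\<gamma>. \<Phi> k (\<lambda>n. (\<beta> n, \<gamma> n))" using \<Phi>(2) by auto
    then obtain \<Gamma> where \<Gamma>: "\<And>k. \<Phi> k (\<lambda>n. (\<beta> n, \<Gamma> k n))" by metis
    show "\<exists>\<gamma>. \<Psi> (\<lambda>n. (\<beta> n, \<gamma> n))"
      by (rule exI[of _ "\<lambda>p. case prod_decode p of (k, m) \<Rightarrow> \<Gamma> k m"])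
         (simp add: \<Psi>_def \<Gamma>)
  next
    fix \<beta> \<gamma> k assume "\<Psi> (\<lambda>n. (\<beta> n, \<gamma> n))"
    then have "\<Phi> k (\<lambda>m. (\<beta> m, \<gamma> (prod_encode (k, m))))" by (simp add: \<Psi>_def)
    then show "\<beta> \<in> B k" using \<Phi>(2) by auto
  qed
  ultimately show ?thesis unfolding Sus_def by blast
qed

lemma Sus_borel:
  assumes "B \<in> sets (borel :: (nat \<Rightarrow> nat) measure)"
  shows "Sus B \<and> Sus (- B)"
proof -
  have "B \<in> sets (Pi\<^sub>M UNIV (\<lambda>_. borel :: nat measure))"
    using assms sets_PiM_equal_borel by blast
  then have B: "B \<in> sigma_sets UNIV {{f. f i \<in> A} |i A. A \<in> sets (borel :: nat measure)}"
    unfolding sets_PiM_single by (simp add: PiE_UNIV_domain)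
  show ?thesis
    using B
  proof (induction rule: sigma_sets.induct)
    case (Basic a)
    then obtain i A where "a = {f. f i \<in> A}" by auto
    moreover have "- {f::nat\<Rightarrow>nat. f i \<in> A} = {f. f i \<in> - A}" by auto
    ultimately show ?case using Sus_coord[of "\<lambda>x. x \<in> A" i] Sus_coord[of "\<lambda>x. x \<in> - A" i] by simp
  next
    case Empty
    then show ?case using Sus_const by simp
  next
    case (Compl a)
    then show ?case by (simp add: Compl_eq_Diff_UNIV[symmetric])
  next
    case (Union a)
    have "- (\<Union> (range a)) = (\<Inter>i. - a i)" by auto
    then show ?case using Union by (simp add: Sus_union Sus_inter)
  qed
qed


lemma pigeon:
  assumes fin: "finite F"
    and ex: "\<And>N::nat. N \<ge> n0 \<Longrightarrow> \<exists>x\<in>F. Q N x"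
    and anti: "\<And>N N' x. n0 \<le> N' \<Longrightarrow> N' \<le> N \<Longrightarrow> Q N x \<Longrightarrow> Q N' x"
  shows "\<exists>x\<in>F. \<forall>N\<ge>n0. Q N x"
proof (rule ccontr)
  assume "\<not> ?thesis"
  then have "\<forall>x\<in>F. \<exists>N. N \<ge> n0 \<and> \<not> Q N x" by auto
  then obtain Nf where Nf: "\<And>x. x \<in> F \<Longrightarrow> Nf x \<ge> n0 \<and> \<not> Q (Nf x) x" by metis
  define N where "N = n0 + sum Nf F"
  obtain x where x: "x \<in> F" "Q N x" using ex[of N] by (auto simp: N_def)
  have "Nf x \<le> sum Nf F" using fin x(1) by (intro member_le_sum) auto
  then have "Q (Nf x) x" using anti[of "Nf x" N x] Nf[OF x(1)] x(2) by (auto simp: N_def)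
  with Nf[OF x(1)] show False by auto
qed

lemma koenig:
  fixes P :: "nat \<Rightarrow> 'x \<Rightarrow> bool" and \<rho> :: "nat \<Rightarrow> 'x \<Rightarrow> 'x"
  assumes fin: "\<And>n. finite {x. P n x}"
    and ne: "\<And>n. \<exists>x. P n x"
    and res: "\<And>m n x. m \<le> n \<Longrightarrow> P n x \<Longrightarrow> P m (\<rho> m x)"
    and comp: "\<And>m n N x. m \<le> n \<Longrightarrow> n \<le> N \<Longrightarrow> P N x \<Longrightarrow> \<rho> m (\<rho> n x) = \<rho> m x"
    and idem: "\<And>n x. P n x \<Longrightarrow> \<rho> n x = x"
  shows "\<exists>X. \<forall>n. P n (X n) \<and> (\<forall>m\<le>n. \<rho> m (X n) = X m)"
proof -
  define G where "G n x \<longleftrightarrow> P n x \<and> (\<forall>N\<ge>n. \<exists>y. P N y \<and> \<rho> n y = x)" for n x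
  have G0: "\<exists>x. G 0 x"
  proof -
    have "\<exists>x\<in>{x. P 0 x}. \<forall>N\<ge>0. (\<exists>y. P N y \<and> \<rho> 0 y = x)"
    proof (rule pigeon[OF fin])
      fix N :: nat
      obtain y where "P N y" using ne by blast
      then show "\<exists>x\<in>{x. P 0 x}. \<exists>y. P N y \<and> \<rho> 0 y = x" using res[of 0 N y] by auto
    next
      fix N N' x assume "0 \<le> N'" "N' \<le> N" "\<exists>y. P N y \<and> \<rho> 0 y = x"
      then obtain y where y: "P N y" "\<rho> 0 y = x" by auto
      show "\<exists>y. P N' y \<and> \<rho> 0 y = x"
        by (rule exI[of _ "\<rho> N' y"]) (use y res[of N' N y] comp[of 0 N' N y] \<open>N' \<le> N\<close> in auto)
    qed
    then show ?thesis unfolding G_def by auto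
  qed
  have GS: "\<exists>x'. G (Suc n) x' \<and> \<rho> n x' = x" if Gnx: "G n x" for n x
  proof -
    have "\<exists>x'\<in>{x. P (Suc n) x}. \<forall>N\<ge>Suc n. (\<exists>y. P N y \<and> \<rho> (Suc n) y = x' \<and> \<rho> n y = x)"
    proof (rule pigeon[OF fin])
      fix N :: nat assume N: "N \<ge> Suc n"
      have "N \<ge> n" using N by simp
      then obtain y where "P N y" "\<rho> n y = x" using Gnx unfolding G_def by blast
      then show "\<exists>x'\<in>{x. P (Suc n) x}. \<exists>y. P N y \<and> \<rho> (Suc n) y = x' \<and> \<rho> n y = x"
        using res[of "Suc n" N y] N by auto
    next
      fix N N' x' assume NN: "Suc n \<le> N'" "N' \<le> N" "\<exists>y. P N y \<and> \<rho> (Suc n) y = x' \<and> \<rho> n y = x"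
      then obtain y where y: "P N y" "\<rho> (Suc n) y = x'" "\<rho> n y = x" by auto
      show "\<exists>y. P N' y \<and> \<rho> (Suc n) y = x' \<and> \<rho> n y = x"
        by (rule exI[of _ "\<rho> N' y"])
           (use y res[of N' N y] comp[of "Suc n" N' N y] comp[of n N' N y] NN in auto)
    qed
    then obtain x' where x': "P (Suc n) x'" "\<And>N. N \<ge> Suc n \<Longrightarrow> \<exists>y. P N y \<and> \<rho> (Suc n) y = x' \<and> \<rho> n y = x"
      by auto
    obtain y where y: "P (Suc n) y" "\<rho> (Suc n) y = x'" "\<rho> n y = x" using x'(2)[of "Suc n"] by auto
    have "\<rho> n x' = x" using y comp[of n "Suc n" "Suc n" y] by auto
    moreover have "G (Suc n) x'" unfolding G_def using x' by blast
    ultimately show ?thesis by blast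
  qed
  define X where "X = rec_nat (SOME x. G 0 x) (\<lambda>n x. SOME x'. G (Suc n) x' \<and> \<rho> n x' = x)"
  have X0: "X 0 = (SOME x. G 0 x)" and XS: "X (Suc n) = (SOME x'. G (Suc n) x' \<and> \<rho> n x' = X n)" for n
    unfolding X_def by auto
  have XG: "G n (X n) \<and> (\<forall>m. n = Suc m \<longrightarrow> \<rho> m (X n) = X m)" for n
  proof (induction n)
    case 0
    then show ?case using G0 unfolding X0 by (auto intro: someI_ex)
  next
    case (Suc n)
    then have "\<exists>x'. G (Suc n) x' \<and> \<rho> n x' = X n" using GS by blast
    then have "G (Suc n) (X (Suc n)) \<and> \<rho> n (X (Suc n)) = X n" unfolding XS by (rule someI_ex)
    then show ?case by auto
  qed
  have XP: "P n (X n)" for n using XG[of n] unfolding G_def by auto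
  have "\<rho> m (X n) = X m" if "m \<le> n" for m n
    using that
  proof (induction n)
    case 0
    then show ?case using idem XP by auto
  next
    case (Suc n)
    show ?case
    proof (cases "m = Suc n")
      case True
      then show ?thesis using idem XP by auto
    next
      case False
      then have "m \<le> n" using Suc by auto
      have "\<rho> m (X (Suc n)) = \<rho> m (\<rho> n (X (Suc n)))"
        using comp[of m n "Suc n" "X (Suc n)"] XP \<open>m \<le> n\<close> by auto
      also have "\<dots> = \<rho> m (X n)" using XG[of "Suc n"] by auto
      also have "\<dots> = X m" using Suc.IH \<open>m \<le> n\<close> by auto
      finally show ?thesis .
    qed
  qed
  then show ?thesis using XP by blast
qed

lemma length_restr[simp]: "length (restr a n) = n"
  by (simp add: restr_def)

lemma nth_restr[simp]: "i < n \<Longrightarrow> restr a n ! i = a i"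
  by (simp add: restr_def)

lemma take_restr[simp]: "take m (restr a n) = restr a (min m n)"
proof (cases "m \<le> n")
  case True
  then show ?thesis by (simp add: restr_def take_map min_def)
next
  case False
  then show ?thesis by (simp add: restr_def take_map min_def)
qed

lemma restr_eq_iff: "restr a n = restr b n \<longleftrightarrow> (\<forall>i<n. a i = b i)"
  by (auto simp: restr_def)

lemma restr_0[simp]: "restr a 0 = []"
  by (simp add: restr_def)

lemma fun_eq_restr: "(\<And>n. restr a (Suc n) = restr b (Suc n)) \<Longrightarrow> a = b"
proof
  fix n assume "\<And>n. restr a (Suc n) = restr b (Suc n)"
  then have "restr a (Suc n) ! n = restr b (Suc n) ! n" by metis
  then show "a n = b n" by simp
qed


type_synonym trip = "nat \<Rightarrow> bool \<times> bool \<times> nat"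

definition s0 :: "(trip \<Rightarrow> bool) \<Rightarrow> bool list \<Rightarrow> bool list \<Rightarrow> nat list \<Rightarrow> bool" where
  "s0 \<Phi> u v t \<longleftrightarrow> (\<exists>a b w. \<Phi> (\<lambda>n. (a n, b n, w n)) \<and> u = restr a (length t) \<and>
      v = restr b (length t) \<and> t = restr w (length t))"

definition Rp :: "(trip \<Rightarrow> bool) \<Rightarrow> ((nat \<Rightarrow> bool) \<times> (nat \<Rightarrow> bool)) set" where
  "Rp \<Phi> = {(a, b). \<exists>w. \<Phi> (\<lambda>n. (a n, b n, w n))}"

definition chainok :: "(trip \<Rightarrow> bool) \<Rightarrow> bool list \<Rightarrow> bool list \<Rightarrow> nat list \<Rightarrow> (bool list \<times> nat list) list \<Rightarrow> bool" where
  "chainok \<Phi> u w s cs \<longleftrightarrow>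
    length u = length s \<and> length w = length s \<and> (\<forall>c\<in>set cs. length (snd c) = length s) \<and>
    (\<forall>i<length cs. s0 \<Phi> ((u # map fst cs) ! i) (fst (cs!i)) (snd (cs!i))) \<and>
    last (u # map fst cs) = w \<and>
    (\<forall>j<length s. sum_list (map (\<lambda>c. snd c ! j) cs) + (if j = 0 then length cs else 0) \<le> s ! j)"

definition sec :: "(trip \<Rightarrow> bool) \<Rightarrow> (nat \<Rightarrow> bool) \<Rightarrow> tree" where
  "sec \<Phi> a = {(u, s). \<exists>cs. chainok \<Phi> u (restr a (length s)) s cs}"

lemma s0_take:
  assumes "s0 \<Phi> u v t" shows "s0 \<Phi> (take m u) (take m v) (take m t)"
proof -
  obtain a b w where "\<Phi> (\<lambda>n. (a n, b n, w n))" "u = restr a (length t)"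
      "v = restr b (length t)" "t = restr w (length t)"
    using assms unfolding s0_def by blast
  then have *: "\<Phi> (\<lambda>n. (a n, b n, w n))" "u = restr a (length t)"
      "v = restr b (length t)" "t = restr w (length t)" by auto
  define n where "n = length t"
  have **: "u = restr a n" "v = restr b n" "t = restr w n" using * unfolding n_def by auto
  show ?thesis unfolding s0_def **
    apply (rule exI[of _ a], rule exI[of _ b], rule exI[of _ w])
    using *(1) by (simp add: min.commute)
qed

lemma s0_len: "s0 \<Phi> u v t \<Longrightarrow> length u = length t \<and> length v = length t"
  unfolding s0_def by auto

lemma s0_restr: "\<Phi> (\<lambda>n. (a n, b n, w n)) \<Longrightarrow> s0 \<Phi> (restr a n) (restr b n) (restr w n)"
  unfolding s0_def by auto

lemma s0_branch:
  assumes "cl \<Phi>" "\<And>n. s0 \<Phi> (restr a n) (restr b n) (restr w n)"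
  shows "\<Phi> (\<lambda>n. (a n, b n, w n))"
proof (rule clD[OF assms(1)])
  fix n
  obtain a' b' w' where "\<Phi> (\<lambda>n. (a' n, b' n, w' n))" "restr a n = restr a' n"
    "restr b n = restr b' n" "restr w n = restr w' n"
    using assms(2)[of n] unfolding s0_def by auto
  then show "\<exists>g. \<Phi> g \<and> (\<forall>i<n. g i = (a i, b i, w i))"
    by (intro exI[of _ "\<lambda>n. (a' n, b' n, w' n)"]) (auto simp: restr_eq_iff)
qed

lemma length_seq_add[simp]: "length (seq_add s t) = length s"
  by (simp add: seq_add_def)

lemma nth_seq_add[simp]: "i < length s \<Longrightarrow> seq_add s t ! i = s ! i + t ! i"
  by (simp add: seq_add_def)

lemma chainok_nil: "length u = length s \<Longrightarrow> chainok \<Phi> u u s []"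
  unfolding chainok_def by auto

lemma chainok_mono:
  assumes "chainok \<Phi> u w s cs" "seq_le s t" shows "chainok \<Phi> u w t cs"
proof -
  have "sum_list (map (\<lambda>c. snd c ! j) cs) + (if j = 0 then length cs else 0) \<le> t ! j"
    if "j < length t" for j
  proof -
    have "sum_list (map (\<lambda>c. snd c ! j) cs) + (if j = 0 then length cs else 0) \<le> s ! j"
      using assms that unfolding chainok_def seq_le_def by auto
    also have "s ! j \<le> t ! j" using assms(2) that unfolding seq_le_def by auto
    finally show ?thesis .
  qed
  then show ?thesis using assms unfolding chainok_def seq_le_def by auto
qed

lemma chainok_take:
  assumes "chainok \<Phi> u w s cs"
  shows "chainok \<Phi> (take m u) (take m w) (take m s) (map (\<lambda>c. (take m (fst c), take m (snd c))) cs)"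
proof -
  let ?cs = "map (\<lambda>c. (take m (fst c), take m (snd c))) cs"
  have vs: "take m u # map fst ?cs = map (take m) (u # map fst cs)" by simp
  have nth: "(take m u # map fst ?cs) ! i = take m ((u # map fst cs) ! i)" if "i < Suc (length cs)" for i
    unfolding vs using that by (subst nth_map) auto
  have lst: "last (take m u # map fst ?cs) = take m (last (u # map fst cs))"
    unfolding vs by (rule last_map) simp
  have sums: "map (\<lambda>c. snd c ! j) ?cs = map (\<lambda>c. snd c ! j) cs" if "j < m" for j
    using that by auto
  have L: "last (take m u # map fst ?cs) = take m w"
  proof -
    have "last (u # map fst cs) = w" using assms unfolding chainok_def by blast
    then show ?thesis using lst by simp
  qed
  show ?thesis
    using assms unfolding chainok_def
    apply (intro conjI)
    subgoal by auto
    subgoal by auto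
    subgoal by auto
    subgoal
    proof (intro allI impI)
      fix i assume i: "i < length ?cs"
      have "s0 \<Phi> ((u # map fst cs) ! i) (fst (cs!i)) (snd (cs!i))"
        using assms i unfolding chainok_def by auto
      from s0_take[OF this, of m] show "s0 \<Phi> ((take m u # map fst ?cs) ! i) (fst (?cs!i)) (snd (?cs!i))"
        using nth[of i] i by simp
    qed
    subgoal by (rule L)
    subgoal
    proof (intro allI impI)
      fix j assume j: "j < length (take m s)"
      have "sum_list (map (\<lambda>c. snd c ! j) cs) + (if j = 0 then length cs else 0) \<le> s ! j"
        using assms j unfolding chainok_def by auto
      moreover have "map (\<lambda>c. snd c ! j) ?cs = map (\<lambda>c. snd c ! j) cs" using j by (intro sums) auto
      ultimately show "sum_list (map (\<lambda>c. snd c ! j) ?cs) + (if j = 0 then length ?cs else 0) \<le> take m s ! j"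
        using j by (metis length_map length_take min_less_iff_conj nth_take)
    qed
    done
qed

lemma chainok_append:
  assumes c1: "chainok \<Phi> u v s cs1" and c2: "chainok \<Phi> v w t cs2" and len: "length t = length s"
  shows "chainok \<Phi> u w (seq_add s t) (cs1 @ cs2)"
proof -
  define B where "B = butlast (u # map fst cs1)"
  have lv: "last (u # map fst cs1) = v" using c1 unfolding chainok_def by auto
  have B1: "u # map fst cs1 = B @ [v]"
    unfolding B_def lv[symmetric] by (rule append_butlast_last_id[symmetric]) simp
  have B2: "length B = length cs1" unfolding B_def by simp
  have vs: "u # map fst (cs1 @ cs2) = B @ (v # map fst cs2)"
  proof -
    have "u # map fst (cs1 @ cs2) = (u # map fst cs1) @ map fst cs2" by simp
    also have "\<dots> = (B @ [v]) @ map fst cs2" by (simp only: B1)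
    finally show ?thesis by simp
  qed
  have nth1: "(u # map fst (cs1 @ cs2)) ! i = (u # map fst cs1) ! i" if "i < length cs1" for i
  proof -
    have "(u # map fst (cs1 @ cs2)) ! i = B ! i" unfolding vs using that B2 by (simp add: nth_append)
    moreover have "(u # map fst cs1) ! i = B ! i" unfolding B1 using that B2 by (simp add: nth_append)
    ultimately show ?thesis by simp
  qed
  have nth2: "(u # map fst (cs1 @ cs2)) ! (length cs1 + i) = (v # map fst cs2) ! i" for i
    unfolding vs using B2 by (simp add: nth_append)
  have s01: "s0 \<Phi> ((u # map fst (cs1 @ cs2)) ! i) (fst ((cs1 @ cs2) ! i)) (snd ((cs1 @ cs2) ! i))"
    if "i < length (cs1 @ cs2)" for i
  proof (cases "i < length cs1")
    case True
    have "s0 \<Phi> ((u # map fst cs1) ! i) (fst (cs1 ! i)) (snd (cs1 ! i))"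
      using c1 True unfolding chainok_def by blast
    then show ?thesis using nth1[OF True] True by (simp add: nth_append)
  next
    case False
    define k where "k = i - length cs1"
    have k: "i = length cs1 + k" "k < length cs2" using that False unfolding k_def by auto
    have "s0 \<Phi> ((v # map fst cs2) ! k) (fst (cs2 ! k)) (snd (cs2 ! k))"
      using c2 k(2) unfolding chainok_def by blast
    then show ?thesis using nth2[of k] unfolding k(1) by (simp add: nth_append)
  qed
  have lst: "last (u # map fst (cs1 @ cs2)) = w"
    using c2 unfolding vs chainok_def by auto
  have l1: "length u = length s" "length v = length s" "\<forall>c\<in>set cs1. length (snd c) = length s"
    using c1 unfolding chainok_def by auto
  have l2: "length w = length s" "\<forall>c\<in>set cs2. length (snd c) = length s"
    using c2 len unfolding chainok_def by auto
  have sm: "\<forall>j<length (seq_add s t). sum_list (map (\<lambda>c. snd c ! j) (cs1 @ cs2)) + (if j = 0 then length (cs1 @ cs2) else 0)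
          \<le> seq_add s t ! j"
  proof (intro allI impI)
    fix j assume j: "j < length (seq_add s t)"
    have a1: "sum_list (map (\<lambda>c. snd c ! j) cs1) + (if j = 0 then length cs1 else 0) \<le> s ! j"
      using c1 j unfolding chainok_def by auto
    have a2: "sum_list (map (\<lambda>c. snd c ! j) cs2) + (if j = 0 then length cs2 else 0) \<le> t ! j"
      using c2 j len unfolding chainok_def by auto
    show "sum_list (map (\<lambda>c. snd c ! j) (cs1 @ cs2)) + (if j = 0 then length (cs1 @ cs2) else 0)
        \<le> seq_add s t ! j"
      using a1 a2 j by auto
  qed
  have l3: "\<forall>c\<in>set (cs1 @ cs2). length (snd c) = length (seq_add s t)"
    using l1(3) l2(2) by auto
  show ?thesis
    unfolding chainok_def
    using l1(1) l2(1) l3 s01 lst sm by simp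
qed

lemma chainok_single:
  assumes "\<Phi> (\<lambda>n. (a n, b n, w n))"
  shows "chainok \<Phi> (restr a n) (restr b n) (restr (w(0 := Suc (w 0))) n) [(restr b n, restr w n)]"
  using s0_restr[where \<Phi>=\<Phi> and a=a and b=b and w=w, OF assms, of n] unfolding chainok_def by auto

lemma normal_sec: "normal_tree (sec \<Phi> a)"
  unfolding normal_tree_def
proof (intro conjI allI impI)
  show "([], []) \<in> sec \<Phi> a" unfolding sec_def using chainok_nil[of "[]" "[]" \<Phi>] by auto
next
  fix u s assume "(u, s) \<in> sec \<Phi> a"
  then show "length u = length s" unfolding sec_def chainok_def by auto
next
  fix u s n assume "(u, s) \<in> sec \<Phi> a"
  then obtain cs where "chainok \<Phi> u (restr a (length s)) s cs" unfolding sec_def by auto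
  from chainok_take[OF this, of n] show "(take n u, take n s) \<in> sec \<Phi> a"
    unfolding sec_def by (auto simp: min.commute)
next
  fix u s t assume "(u, s) \<in> sec \<Phi> a" "seq_le s t"
  then show "(u, t) \<in> sec \<Phi> a"
    unfolding sec_def by (auto dest: chainok_mono simp: seq_le_def)
qed

lemma le_sec:
  assumes "(a, b) \<in> Rp \<Phi>" shows "le_S (sec \<Phi> a) (sec \<Phi> b)"
proof -
  obtain w where w: "\<Phi> (\<lambda>n. (a n, b n, w n))" using assms unfolding Rp_def by auto
  show ?thesis
    unfolding le_S_def
  proof (intro exI allI impI)
    fix u s assume "(u, s) \<in> sec \<Phi> a"
    then obtain cs where cs: "chainok \<Phi> u (restr a (length s)) s cs" unfolding sec_def by auto
    have "chainok \<Phi> u (restr b (length s)) (seq_add s (restr (w(0 := Suc (w 0))) (length s)))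
            (cs @ [(restr b (length s), restr w (length s))])"
      by (rule chainok_append[OF cs chainok_single[where \<Phi>=\<Phi> and a=a and b=b and w=w, OF w]]) simp
    then show "(u, seq_add s (restr (w(0 := Suc (w 0))) (length s))) \<in> sec \<Phi> b"
      unfolding sec_def by auto
  qed
qed

lemma A_sec_refl: "b \<in> A_of (sec \<Phi> b)"
proof -
  have "\<forall>n. (restr b n, restr (\<lambda>_. 0::nat) n) \<in> sec \<Phi> b"
    unfolding sec_def using chainok_nil[of "restr b _" "restr (\<lambda>_. 0::nat) _" \<Phi>] by auto
  then show ?thesis unfolding A_of_def by blast
qed

lemma A_sec_Rp:
  assumes "(a, b) \<in> Rp \<Phi>" shows "a \<in> A_of (sec \<Phi> b)"
proof -
  obtain w where w: "\<Phi> (\<lambda>n. (a n, b n, w n))" using assms unfolding Rp_def by auto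
  show ?thesis
    unfolding A_of_def sec_def
    using chainok_single[where \<Phi>=\<Phi> and a=a and b=b and w=w, OF w] by (intro CollectI exI[of _ "w(0 := Suc (w 0))"]) auto
qed


lemma last_cons_nth: "last (x # xs) = (x # xs) ! length xs"
  by (induction xs arbitrary: x) auto

lemma chainok_lens:
  assumes "chainok \<Phi> u w s cs" "c \<in> set cs"
  shows "length (fst c) = length s \<and> length (snd c) = length s"
proof -
  obtain i where i: "i < length cs" "c = cs ! i" using assms(2) by (metis in_set_conv_nth)
  then have "s0 \<Phi> ((u # map fst cs) ! i) (fst c) (snd c)" "length (snd c) = length s"
    using assms unfolding chainok_def by auto
  then show ?thesis using s0_len by metis
qed

lemma chainok_bounds:
  assumes "chainok \<Phi> u w s cs" "length s > 0"
  shows "length cs \<le> s ! 0"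
    and "\<And>c j. c \<in> set cs \<Longrightarrow> j < length s \<Longrightarrow> snd c ! j \<le> s ! j"
proof -
  have "sum_list (map (\<lambda>c. snd c ! 0) cs) + length cs \<le> s ! 0"
    using assms unfolding chainok_def by auto
  then show "length cs \<le> s ! 0" by simp
next
  fix c j assume c: "c \<in> set cs" and j: "j < length s"
  have "snd c ! j \<le> sum_list (map (\<lambda>c. snd c ! j) cs)"
    using c by (intro member_le_sum_list) auto
  also have "\<dots> \<le> sum_list (map (\<lambda>c. snd c ! j) cs) + (if j = 0 then length cs else 0)" by simp
  also have "\<dots> \<le> s ! j" using assms j unfolding chainok_def by blast
  finally show "snd c ! j \<le> s ! j" .
qed

lemma finite_chains:
  "finite {cs. chainok \<Phi> u w (restr \<beta> (Suc n)) cs}"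
proof -
  define M where "M = sum \<beta> {..n}"
  define F where "F = {v::bool list. set v \<subseteq> UNIV \<and> length v = Suc n} \<times> {t. set t \<subseteq> {0..M} \<and> length t = Suc n}"
  have fF: "finite F" unfolding F_def
    by (intro finite_cartesian_product finite_lists_length_eq) auto
  have "{cs. chainok \<Phi> u w (restr \<beta> (Suc n)) cs} \<subseteq> {cs. set cs \<subseteq> F \<and> length cs \<le> \<beta> 0}"
  proof safe
    fix cs assume cs: "chainok \<Phi> u w (restr \<beta> (Suc n)) cs"
    show "length cs \<le> \<beta> 0" using chainok_bounds(1)[OF cs] by simp
    fix c assume c: "c \<in> set cs"
    have l: "length (fst c) = Suc n" "length (snd c) = Suc n" using chainok_lens[OF cs c] by auto
    have "set (snd c) \<subseteq> {0..M}"
    proof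
      fix x assume "x \<in> set (snd c)"
      then obtain j where j: "j < Suc n" "x = snd c ! j" using l by (metis in_set_conv_nth)
      have "x \<le> restr \<beta> (Suc n) ! j" using chainok_bounds(2)[OF cs _ c, of j] j by simp
      also have "\<dots> = \<beta> j" using j by simp
      also have "\<dots> \<le> M" unfolding M_def using j by (intro member_le_sum) auto
      finally show "x \<in> {0..M}" by simp
    qed
    then show "c \<in> F" using l unfolding F_def by (cases c) auto
  qed
  moreover have "finite {cs. set cs \<subseteq> F \<and> length cs \<le> \<beta> 0}"
    by (rule finite_lists_length_le[OF fF])
  ultimately show ?thesis by (rule finite_subset)
qed

lemma A_sec_rtrancl:
  assumes clp: "cl \<Phi>" and A: "a \<in> A_of (sec \<Phi> b)"
  shows "(a, b) \<in> (Rp \<Phi>)\<^sup>*"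
proof -
  obtain \<beta> where \<beta>: "\<And>n. \<exists>cs. chainok \<Phi> (restr a n) (restr b n) (restr \<beta> n) cs"
    using A unfolding A_of_def sec_def by auto
  define P where "P n cs \<longleftrightarrow> chainok \<Phi> (restr a (Suc n)) (restr b (Suc n)) (restr \<beta> (Suc n)) cs" for n cs
  define \<rho> where "\<rho> n cs = map (\<lambda>c. (take (Suc n) (fst c), take (Suc n) (snd c))) (cs :: (bool list \<times> nat list) list)" for n cs
  have idem: "\<rho> n cs = cs" if "P n cs" for n cs
  proof -
    have "\<forall>c\<in>set cs. length (fst c) = Suc n \<and> length (snd c) = Suc n"
      using chainok_lens[OF that[unfolded P_def]] by simp
    then show ?thesis unfolding \<rho>_def by (induction cs) auto
  qed
  have "\<exists>X. \<forall>n. P n (X n) \<and> (\<forall>m\<le>n. \<rho> m (X n) = X m)"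
  proof (rule koenig)
    show "finite {x. P n x}" for n unfolding P_def by (rule finite_chains)
    show "\<exists>x. P n x" for n unfolding P_def using \<beta> by blast
    show "P m (\<rho> m x)" if "m \<le> n" "P n x" for m n x
      using chainok_take[OF that(2)[unfolded P_def], of "Suc m"] that(1)
      unfolding P_def \<rho>_def by (simp add: min_def)
    show "\<rho> m (\<rho> n x) = \<rho> m x" if "m \<le> n" for m n :: nat and x :: "(bool list \<times> nat list) list"
      unfolding \<rho>_def using that by (simp add: min_def)
    show "\<rho> n x = x" if "P n x" for n x using idem that by blast
  qed
  then obtain X where X: "\<And>n. P n (X n)" "\<And>m n. m \<le> n \<Longrightarrow> \<rho> m (X n) = X m" by blast
  define k where "k = length (X 0)"
  have lenX: "length (X n) = k" for n
    using X(2)[of 0 n] unfolding k_def \<rho>_def by (metis le0 length_map)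
  define Z where "Z i j = fst (X j ! i) ! j" for i j
  define T where "T i j = snd (X j ! i) ! j" for i j
  have lensX: "length (fst (X n ! i)) = Suc n \<and> length (snd (X n ! i)) = Suc n" if "i < k" for n i
    using chainok_lens[OF X(1)[of n, unfolded P_def], of "X n ! i"] that lenX[of n] by simp
  have XjXn: "X j ! i = (take (Suc j) (fst (X n ! i)), take (Suc j) (snd (X n ! i)))"
    if "j \<le> n" "i < k" for i j n
  proof -
    have "X j = \<rho> j (X n)" using X(2)[OF that(1)] by simp
    then show ?thesis unfolding \<rho>_def using that(2) lenX[of n] by simp
  qed
  have rZ: "restr (Z i) (Suc n) = fst (X n ! i)" if "i < k" for i n
  proof (rule nth_equalityI)
    show "length (restr (Z i) (Suc n)) = length (fst (X n ! i))" using lensX[OF that] by simp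
    fix j assume "j < length (restr (Z i) (Suc n))"
    then have j: "j < Suc n" by simp
    have "restr (Z i) (Suc n) ! j = fst (X j ! i) ! j" using j unfolding Z_def by simp
    also have "\<dots> = fst (X n ! i) ! j" using XjXn[of j n i] j that by simp
    finally show "restr (Z i) (Suc n) ! j = fst (X n ! i) ! j" .
  qed
  have rT: "restr (T i) (Suc n) = snd (X n ! i)" if "i < k" for i n
  proof (rule nth_equalityI)
    show "length (restr (T i) (Suc n)) = length (snd (X n ! i))" using lensX[OF that] by simp
    fix j assume "j < length (restr (T i) (Suc n))"
    then have j: "j < Suc n" by simp
    have "restr (T i) (Suc n) ! j = snd (X j ! i) ! j" using j unfolding T_def by simp
    also have "\<dots> = snd (X n ! i) ! j" using XjXn[of j n i] j that by simp
    finally show "restr (T i) (Suc n) ! j = snd (X n ! i) ! j" .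
  qed
  define ZZ where "ZZ i = (case i of 0 \<Rightarrow> a | Suc i' \<Rightarrow> Z i')" for i
  have vsn: "(restr a (Suc n) # map fst (X n)) ! i = restr (ZZ i) (Suc n)" if "i \<le> k" for i n
  proof (cases i)
    case 0
    then show ?thesis unfolding ZZ_def by simp
  next
    case (Suc i')
    then have "i' < k" using that by simp
    then show ?thesis unfolding ZZ_def Suc using rZ[of i' n] lenX[of n] by simp
  qed
  have link: "(ZZ i, ZZ (Suc i)) \<in> Rp \<Phi>" if "i < k" for i
  proof -
    have sS: "s0 \<Phi> (restr (ZZ i) (Suc n)) (restr (ZZ (Suc i)) (Suc n)) (restr (T i) (Suc n))" for n
    proof -
      have "s0 \<Phi> ((restr a (Suc n) # map fst (X n)) ! i) (fst (X n ! i)) (snd (X n ! i))"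
        using X(1)[of n] that lenX[of n] unfolding P_def chainok_def by auto
      then show ?thesis using vsn[of i n] rZ[OF that, of n] rT[OF that, of n] that
        unfolding ZZ_def by simp
    qed
    have "s0 \<Phi> (restr (ZZ i) n) (restr (ZZ (Suc i)) n) (restr (T i) n)" for n
      using s0_take[OF sS[of n], of n] by (simp add: min_def)
    then have "\<Phi> (\<lambda>n. (ZZ i n, ZZ (Suc i) n, T i n))" by (rule s0_branch[OF clp])
    then show ?thesis unfolding Rp_def by blast
  qed
  have "ZZ k = b"
  proof (rule fun_eq_restr)
    fix n
    have "last (restr a (Suc n) # map fst (X n)) = restr b (Suc n)"
      using X(1)[of n] unfolding P_def chainok_def by blast
    moreover have "last (restr a (Suc n) # map fst (X n)) = (restr a (Suc n) # map fst (X n)) ! k"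
      using lenX[of n] last_cons_nth[of "restr a (Suc n)" "map fst (X n)"] by simp
    ultimately show "restr (ZZ k) (Suc n) = restr b (Suc n)" using vsn[of k n] by simp
  qed
  have "(a, ZZ i) \<in> (Rp \<Phi>)\<^sup>*" if "i \<le> k" for i
    using that
  proof (induction i)
    case 0
    then show ?case unfolding ZZ_def by simp
  next
    case (Suc i)
    then show ?case using link[of i] by (meson Suc_le_lessD less_imp_le_nat rtrancl.rtrancl_into_rtrancl)
  qed
  then show ?thesis using \<open>ZZ k = b\<close> by blast
qed


lemma sb_embed:
  assumes "standard_borel M"
  shows "\<exists>U::nat \<Rightarrow> 'a set. (\<forall>k. U k \<in> sets M) \<and> inj_on (\<lambda>x k. x \<in> U k) (space M)"
proof -
  obtain X where X: "completely_metrizable_space X" "separable_space X" "topspace X = space M"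
    "sets M = sigma_sets (space M) {U. openin X U}"
    using assms unfolding standard_borel_def by blast
  obtain S d where Sd: "Metric_space S d" "X = Metric_space.mtopology S d"
    using X(1) unfolding completely_metrizable_space_def by blast
  interpret Metric_space S d by (rule Sd(1))
  obtain C where C: "countable C" "C \<subseteq> topspace X" "X closure_of C = topspace X"
    using X(2) unfolding separable_space_def by blast
  have SM: "S = space M" using X(3) Sd(2) by simp
  define U where "U k = (if C = {} then {} else
      (case prod_decode k of (i, n) \<Rightarrow> mball (from_nat_into C i) (1 / (real n + 1))))" for k
  have open_U: "openin X (U k)" for k
    unfolding U_def Sd(2) by (auto split: prod.splits)
  have "U k \<in> sets M" for k
    unfolding X(4) using open_U by (intro sigma_sets.Basic) auto
  moreover have "inj_on (\<lambda>x k. x \<in> U k) (space M)"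
  proof (rule inj_onI)
    fix x y assume x: "x \<in> space M" and y: "y \<in> space M" and eq: "(\<lambda>k. x \<in> U k) = (\<lambda>k. y \<in> U k)"
    show "x = y"
    proof (rule ccontr)
      assume "x \<noteq> y"
      have xS: "x \<in> S" and yS: "y \<in> S" using x y SM by auto
      have dpos: "d x y > 0" using \<open>x \<noteq> y\<close> xS yS by simp
      obtain n :: nat where n: "1 / (real n + 1) < d x y / 2"
      proof -
        obtain n :: nat where "inverse (real (Suc n)) < d x y / 2" using reals_Archimedean dpos
          by (metis half_gt_zero)
        then show ?thesis using that[of n] by (simp add: inverse_eq_divide add.commute)
      qed
      have "x \<in> X closure_of C" using C(3) x X(3) by simp
      then have "\<forall>r>0. \<exists>c\<in>C. c \<in> mball x r"
        unfolding Sd(2) metric_closure_of by auto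
      then obtain c where c: "c \<in> C" "c \<in> mball x (1 / (real n + 1))"
        by (metis divide_pos_pos of_nat_0_le_iff zero_less_one add_nonneg_pos zero_less_one)
      have cS: "c \<in> S" using c(2) by simp
      have dxc: "d x c < 1 / (real n + 1)" using c(2) by simp
      have Cne: "C \<noteq> {}" using c by auto
      obtain i where i: "from_nat_into C i = c" using from_nat_into_surj[OF C(1) c(1)] by blast
      define k where "k = prod_encode (i, n)"
      have Uk: "U k = mball c (1 / (real n + 1))"
        unfolding U_def k_def using Cne i by simp
      have "x \<in> U k" unfolding Uk using dxc xS cS by (simp add: commute)
      moreover have "y \<notin> U k"
      proof
        assume "y \<in> U k"
        then have "d c y < 1 / (real n + 1)" unfolding Uk by simp
        moreover have "d x y \<le> d x c + d c y" using xS yS cS triangle by blast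
        ultimately show False using dxc n by linarith
      qed
      ultimately show False using eq by metis
    qed
  qed
  ultimately show ?thesis by blast
qed


definition pz :: "trip \<Rightarrow> nat \<Rightarrow> nat \<Rightarrow> nat \<times> nat" where
  "pz z q = (\<lambda>m. (snd (snd (z (prod_encode (0, m)))), snd (snd (z (prod_encode (Suc q, m))))))"

lemma pz_cont: "\<exists>L. \<forall>f g. (\<forall>i<L. f i = g i) \<longrightarrow> (\<forall>i<n. pz f q i = pz g q i)"
proof (rule exI[of _ "Suc (prod_encode (0, n) + prod_encode (Suc q, n))"], intro allI impI)
  fix f g :: trip and i
  assume fg: "\<forall>i<Suc (prod_encode (0, n) + prod_encode (Suc q, n)). f i = g i" and i: "i < n"
  have "prod_encode (0, i) \<le> prod_encode (0, n)" "prod_encode (Suc q, i) \<le> prod_encode (Suc q, n)"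
    using i by (auto intro: prod_encode_mono2)
  then show "pz f q i = pz g q i" using fg unfolding pz_def by auto
qed

lemma cl_pz_imp:
  assumes "cl \<Psi>" shows "cl (\<lambda>z. Q (z k) \<longrightarrow> \<Psi> (pz z q))"
  by (rule cl_imp_coord[where P=Q and i=k, OF cl_pull[OF assms pz_cont]])

lemma analytic_Phi:
  fixes G :: "(nat \<Rightarrow> nat) \<Rightarrow> 'a \<times> 'a"
  assumes G: "G \<in> measurable borel (M \<Otimes>\<^sub>M M)" and U: "\<And>k. U k \<in> sets M"
  shows "\<exists>\<Phi>. cl \<Phi> \<and> Rp \<Phi> = {((\<lambda>k. x \<in> U k), (\<lambda>k. y \<in> U k)) | x y. (x, y) \<in> range G}"
proof -
  define B1 where "B1 k = (fst \<circ> G) -` U k \<inter> space borel" for k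
  define B2 where "B2 k = (snd \<circ> G) -` U k \<inter> space borel" for k
  have mB: "B1 k \<in> sets borel" "B2 k \<in> sets borel" for k
    unfolding B1_def B2_def
    using measurable_sets[OF measurable_compose[OF G measurable_fst] U]
          measurable_sets[OF measurable_compose[OF G measurable_snd] U] by (auto simp: comp_def)
  define D where "D q = (case prod_decode q of (k, r) \<Rightarrow>
     if r = 0 then B1 k else if r = 1 then - B1 k else if r = 2 then B2 k else - B2 k)" for q
  have "Sus (D q)" for q
    unfolding D_def using Sus_borel[OF mB(1)] Sus_borel[OF mB(2)] by (auto split: prod.splits)
  then have "\<forall>q. \<exists>\<Psi>. cl \<Psi> \<and> D q = {\<beta>. \<exists>\<gamma>. \<Psi> (\<lambda>n. (\<beta> n, \<gamma> n :: nat))}"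
    unfolding Sus_def by blast
  then obtain \<Psi> where \<Psi>: "\<And>q. cl (\<Psi> q)" "\<And>q. D q = {\<beta>. \<exists>\<gamma>. \<Psi> q (\<lambda>n. (\<beta> n, \<gamma> n :: nat))}"
    by metis
  have D0: "D (prod_encode (k, 0)) = B1 k" and D1: "D (prod_encode (k, 1)) = - B1 k"
    and D2: "D (prod_encode (k, 2)) = B2 k" and D3: "D (prod_encode (k, 3)) = - B2 k" for k
    unfolding D_def by auto
  define \<Phi> where "\<Phi> z = (\<forall>k.
      (fst (z k) \<longrightarrow> \<Psi> (prod_encode (k, 0)) (pz z (prod_encode (k, 0)))) \<and>
      (\<not> fst (z k) \<longrightarrow> \<Psi> (prod_encode (k, 1)) (pz z (prod_encode (k, 1)))) \<and>
      (fst (snd (z k)) \<longrightarrow> \<Psi> (prod_encode (k, 2)) (pz z (prod_encode (k, 2)))) \<and>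
      (\<not> fst (snd (z k)) \<longrightarrow> \<Psi> (prod_encode (k, 3)) (pz z (prod_encode (k, 3)))))" for z :: trip
  have "cl \<Phi>"
    unfolding \<Phi>_def
    by (intro cl_all cl_conj cl_pz_imp[where Q="\<lambda>x. fst x"] cl_pz_imp[where Q="\<lambda>x. \<not> fst x"]
        cl_pz_imp[where Q="\<lambda>x. fst (snd x)"] cl_pz_imp[where Q="\<lambda>x. \<not> fst (snd x)"] \<Psi>(1))
  moreover have "Rp \<Phi> = {((\<lambda>k. x \<in> U k), (\<lambda>k. y \<in> U k)) | x y. (x, y) \<in> range G}"
  proof safe
    fix a b assume "(a, b) \<in> Rp \<Phi>"
    then obtain w where w: "\<Phi> (\<lambda>n. (a n, b n, w n))" unfolding Rp_def by auto
    define \<beta> where "\<beta> m = w (prod_encode (0, m))" for m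
    obtain x y where xy: "G \<beta> = (x, y)" by (cases "G \<beta>")
    have pzw: "pz (\<lambda>n. (a n, b n, w n)) q = (\<lambda>m. (\<beta> m, w (prod_encode (Suc q, m))))" for q
      unfolding pz_def \<beta>_def by simp
    have "a = (\<lambda>k. x \<in> U k)"
    proof
      fix k
      show "a k = (x \<in> U k)"
      proof (cases "a k")
        case True
        then have "\<beta> \<in> D (prod_encode (k, 0))" using w unfolding \<Phi>_def pzw \<Psi>(2) by auto
        then show ?thesis using True xy unfolding D0 B1_def by auto
      next
        case False
        then have "\<beta> \<in> D (prod_encode (k, 1))" using w unfolding \<Phi>_def pzw \<Psi>(2) by auto
        then show ?thesis using False xy unfolding D1 B1_def by auto
      qed
    qed
    moreover have "b = (\<lambda>k. y \<in> U k)"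
    proof
      fix k
      show "b k = (y \<in> U k)"
      proof (cases "b k")
        case True
        then have "\<beta> \<in> D (prod_encode (k, 2))" using w unfolding \<Phi>_def pzw \<Psi>(2) by auto
        then show ?thesis using True xy unfolding D2 B2_def by auto
      next
        case False
        then have "\<beta> \<in> D (prod_encode (k, 3))" using w unfolding \<Phi>_def pzw \<Psi>(2) by auto
        then show ?thesis using False xy unfolding D3 B2_def by auto
      qed
    qed
    ultimately show "\<exists>x y. (a, b) = ((\<lambda>k. x \<in> U k), (\<lambda>k. y \<in> U k)) \<and> (x, y) \<in> range G"
      using xy by (metis rangeI)
  next
    fix x y \<beta> assume xy: "(x, y) = G \<beta>"
    have "\<forall>q. \<exists>\<gamma>. \<beta> \<in> D q \<longrightarrow> \<Psi> q (\<lambda>n. (\<beta> n, \<gamma> n))" using \<Psi>(2) by blast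
    then obtain \<Gamma> where \<Gamma>: "\<And>q. \<beta> \<in> D q \<Longrightarrow> \<Psi> q (\<lambda>n. (\<beta> n, \<Gamma> q n))" by metis
    define w where "w p = (case prod_decode p of (0, m) \<Rightarrow> \<beta> m | (Suc q, m) \<Rightarrow> \<Gamma> q m)" for p
    have pzw: "pz (\<lambda>n. (x \<in> U n, y \<in> U n, w n)) q = (\<lambda>m. (\<beta> m, \<Gamma> q m))" for q
      unfolding pz_def w_def by simp
    have fx: "fst (G \<beta>) = x" "snd (G \<beta>) = y" using xy by (metis fst_conv, metis snd_conv)
    have "\<Phi> (\<lambda>n. (x \<in> U n, y \<in> U n, w n))"
      unfolding \<Phi>_def pzw
    proof (intro allI conjI impI)
      fix k
      show "\<Psi> (prod_encode (k, 0)) (\<lambda>m. (\<beta> m, \<Gamma> (prod_encode (k, 0)) m))" if "fst (x \<in> U k, y \<in> U k, w k)"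
        using that fx by (intro \<Gamma>) (simp add: D0 B1_def)
      show "\<Psi> (prod_encode (k, 1)) (\<lambda>m. (\<beta> m, \<Gamma> (prod_encode (k, 1)) m))" if "\<not> fst (x \<in> U k, y \<in> U k, w k)"
        using that fx by (intro \<Gamma>) (simp add: D1 D1[simplified] B1_def)
      show "\<Psi> (prod_encode (k, 2)) (\<lambda>m. (\<beta> m, \<Gamma> (prod_encode (k, 2)) m))" if "fst (snd (x \<in> U k, y \<in> U k, w k))"
        using that fx by (intro \<Gamma>) (simp add: D2 B2_def)
      show "\<Psi> (prod_encode (k, 3)) (\<lambda>m. (\<beta> m, \<Gamma> (prod_encode (k, 3)) m))" if "\<not> fst (snd (x \<in> U k, y \<in> U k, w k))"
        using that fx by (intro \<Gamma>) (simp add: D3 B2_def)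
    qed
    then show "((\<lambda>k. x \<in> U k), (\<lambda>k. y \<in> U k)) \<in> Rp \<Phi>" unfolding Rp_def by auto
  qed
  ultimately show ?thesis by blast
qed


lemma sec_meas:
  fixes U :: "nat \<Rightarrow> 'a set"
  assumes U[measurable]: "\<And>j. U j \<in> sets M"
  shows "(\<lambda>x. sec \<Phi> (\<lambda>k. x \<in> U k)) \<in> measurable M Tspace"
  unfolding Tspace_def
proof (rule measurable_measure_of)
  show "{{T \<in> NTrees. p \<in> T} |p. True} \<subseteq> Pow NTrees" by auto
  show "(\<lambda>x. sec \<Phi> (\<lambda>k. x \<in> U k)) \<in> space M \<rightarrow> NTrees"
    using normal_sec unfolding NTrees_def by auto
  fix Y assume "Y \<in> {{T \<in> NTrees. p \<in> T} |p. True}"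
  then obtain u s where Y: "Y = {T \<in> NTrees. (u, s) \<in> T}" by auto
  define n where "n = length s"
  define V where "V = {v. set v \<subseteq> UNIV \<and> length v = n \<and> (\<exists>cs. chainok \<Phi> u v s cs)}"
  have fV: "finite V"
    by (rule finite_subset[OF _ finite_lists_length_eq[of "UNIV :: bool set" n]]) (auto simp: V_def)
  have eq: "(\<lambda>x. sec \<Phi> (\<lambda>k. x \<in> U k)) -` Y \<inter> space M =
      {x \<in> space M. \<exists>v\<in>V. \<forall>j<n. (x \<in> U j) = v ! j}"
  proof safe
    fix x assume x: "x \<in> space M" "sec \<Phi> (\<lambda>k. x \<in> U k) \<in> Y"
    then obtain cs where cs: "chainok \<Phi> u (restr (\<lambda>k. x \<in> U k) n) s cs"
      unfolding Y sec_def n_def by auto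
    then have "restr (\<lambda>k. x \<in> U k) n \<in> V" unfolding V_def by auto
    then show "\<exists>v\<in>V. \<forall>j<n. (x \<in> U j) = v ! j" by (intro bexI) auto
  next
    fix x v assume x: "x \<in> space M" "v \<in> V" "\<forall>j<n. (x \<in> U j) = v ! j"
    have "restr (\<lambda>k. x \<in> U k) n = v"
      using x(2,3) unfolding V_def by (intro nth_equalityI) auto
    then obtain cs where "chainok \<Phi> u (restr (\<lambda>k. x \<in> U k) (length s)) s cs"
      using x(2) unfolding V_def n_def by auto
    then have "(u, s) \<in> sec \<Phi> (\<lambda>k. x \<in> U k)" unfolding sec_def by auto
    then show "x \<in> (\<lambda>x. sec \<Phi> (\<lambda>k. x \<in> U k)) -` Y"
      unfolding Y NTrees_def using normal_sec by auto
  qed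
  show "(\<lambda>x. sec \<Phi> (\<lambda>k. x \<in> U k)) -` Y \<inter> space M \<in> sets M"
    unfolding eq using fV by measurable
qed

lemma main_qo:
  fixes M :: "'a measure" and R
  assumes sb: "standard_borel M" and qo: "quasiorder_on (space M) R" and an: "analytic_rel M R"
  shows "\<exists>(f :: 'a \<Rightarrow> tree) (e :: 'a \<Rightarrow> nat \<Rightarrow> bool). f \<in> measurable M Tspace \<and> inj_on e (space M) \<and>
     (\<forall>x\<in>space M. \<forall>y\<in>space M. R x y \<longrightarrow> le_S (f x) (f y)) \<and>
     (\<forall>x\<in>space M. A_of (f x) = e ` {z \<in> space M. R z x})"
proof (cases "space M = {}")
  case True
  have "(\<lambda>_. {([], [])}) \<in> measurable M Tspace"
    unfolding Tspace_def by (rule measurable_measure_of) (auto simp: True)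
  then show ?thesis using True by (intro exI[of _ "\<lambda>_. {([], [])}"] exI[of _ "\<lambda>_ _. True"]) auto
next
  case False
  then obtain x0 where x0: "x0 \<in> space M" by blast
  have refl: "\<And>x. x \<in> space M \<Longrightarrow> R x x" and trans: "\<And>x y z. x \<in> space M \<Longrightarrow> y \<in> space M \<Longrightarrow>
      z \<in> space M \<Longrightarrow> R x y \<Longrightarrow> R y z \<Longrightarrow> R x z"
    using qo unfolding quasiorder_on_def by blast+
  have "rel_graph M R \<noteq> {}" using x0 refl unfolding rel_graph_def by auto
  then obtain G where G: "G \<in> measurable (borel :: (nat \<Rightarrow> nat) measure) (M \<Otimes>\<^sub>M M)"
    "range G = rel_graph M R"
    using an unfolding analytic_rel_def analytic_set_def by blast
  obtain U :: "nat \<Rightarrow> 'a set" where U: "\<And>k. U k \<in> sets M" and inj: "inj_on (\<lambda>x k. x \<in> U k) (space M)"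
    using sb_embed[OF sb] by blast
  define e where "e x = (\<lambda>k. x \<in> U k)" for x
  obtain \<Phi> where \<Phi>: "cl \<Phi>" "Rp \<Phi> = {((\<lambda>k. x \<in> U k), (\<lambda>k. y \<in> U k)) | x y. (x, y) \<in> range G}"
    using analytic_Phi[where U=U, OF G(1) U] by blast
  have Rp: "Rp \<Phi> = {(e x, e y) | x y. x \<in> space M \<and> y \<in> space M \<and> R x y}"
    unfolding \<Phi>(2) G(2) rel_graph_def e_def by auto
  have injE: "x = y" if "x \<in> space M" "y \<in> space M" "e x = e y" for x y
    using inj that unfolding e_def inj_on_def by blast
  define f where "f x = sec \<Phi> (e x)" for x
  have "f \<in> measurable M Tspace" unfolding f_def e_def by (rule sec_meas[OF U])
  moreover have "inj_on e (space M)" using inj unfolding e_def .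
  moreover have "\<forall>x\<in>space M. \<forall>y\<in>space M. R x y \<longrightarrow> le_S (f x) (f y)"
    unfolding f_def using Rp by (auto intro!: le_sec)
  moreover have "A_of (f x) = e ` {z \<in> space M. R z x}" if x: "x \<in> space M" for x
  proof
    show "e ` {z \<in> space M. R z x} \<subseteq> A_of (f x)"
      unfolding f_def using Rp x by (auto intro!: A_sec_Rp)
    show "A_of (f x) \<subseteq> e ` {z \<in> space M. R z x}"
    proof
      fix \<alpha> assume "\<alpha> \<in> A_of (f x)"
      then have "(\<alpha>, e x) \<in> (Rp \<Phi>)\<^sup>*" unfolding f_def by (rule A_sec_rtrancl[OF \<Phi>(1)])
      then show "\<alpha> \<in> e ` {z \<in> space M. R z x}"
      proof (induction rule: converse_rtrancl_induct)
        case base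
        then show ?case using x refl by auto
      next
        case (step \<alpha> \<beta>)
        from step(1) obtain z1 z2 where z: "\<alpha> = e z1" "\<beta> = e z2" "z1 \<in> space M" "z2 \<in> space M" "R z1 z2"
          unfolding Rp by auto
        from step(3) obtain z3 where z3: "\<beta> = e z3" "z3 \<in> space M" "R z3 x" by auto
        have "z2 = z3" using injE z z3 by metis
        then have "R z1 x" using trans[of z1 z2 x] z z3 x by auto
        then show ?case using z by auto
      qed
    qed
  qed
  ultimately show ?thesis by blast
qed


lemma space_Tspace: "space Tspace = NTrees"
  unfolding Tspace_def by (rule space_measure_of_conv)

lemma sets_Tspace: "sets Tspace = sigma_sets NTrees {{T \<in> NTrees. p \<in> T} |p. True}"
  unfolding Tspace_def by (rule sets_measure_of) auto

lemma Tspace_gen: "{T \<in> space Tspace. p \<in> T} \<in> sets Tspace"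
  unfolding sets_Tspace space_Tspace by (rule sigma_sets.Basic) (cases p, auto)

definition chi :: "tree \<Rightarrow> (bool list \<times> nat list) \<Rightarrow> real" where
  "chi T p = (if p \<in> T then 1 else 0)"

lemma chi_inj: "chi S = chi T \<Longrightarrow> S = T"
proof
  assume eq: "chi S = chi T"
  show "S \<subseteq> T"
  proof
    fix p assume "p \<in> S"
    then have "chi T p = 1" using eq unfolding chi_def by (metis)
    then show "p \<in> T" unfolding chi_def by (auto split: if_splits)
  qed
  show "T \<subseteq> S"
  proof
    fix p assume "p \<in> T"
    then have "chi S p = 1" using eq unfolding chi_def by (metis)
    then show "p \<in> S" unfolding chi_def by (auto split: if_splits)
  qed
qed

definition Kset :: "((bool list \<times> nat list) \<Rightarrow> real) set" where
  "Kset = {h. (\<forall>p. h p = 0 \<or> h p = 1) \<and> h ([], []) = 1 \<and>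
      (\<forall>u s. length u = length s \<or> h (u, s) = 0) \<and>
      (\<forall>u s n. h (u, s) = 0 \<or> h (take n u, take n s) = 1) \<and>
      (\<forall>u s t. \<not> seq_le s t \<or> h (u, s) = 0 \<or> h (u, t) = 1)}"

lemma Kset_eq: "chi ` NTrees = Kset"
proof
  show "chi ` NTrees \<subseteq> Kset"
  proof
    fix h assume "h \<in> chi ` NTrees"
    then obtain T where T: "normal_tree T" "h = chi T" unfolding NTrees_def by auto
    have n: "([], []) \<in> T" "\<And>u s. (u, s) \<in> T \<Longrightarrow> length u = length s"
      "\<And>u s n. (u, s) \<in> T \<Longrightarrow> (take n u, take n s) \<in> T"
      "\<And>u s t. (u, s) \<in> T \<Longrightarrow> seq_le s t \<Longrightarrow> (u, t) \<in> T"
      using T(1) unfolding normal_tree_def by blast+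
    have c1: "chi T p = 1 \<longleftrightarrow> p \<in> T" "chi T p = 0 \<longleftrightarrow> p \<notin> T" for p
      unfolding chi_def by auto
    show "h \<in> Kset" unfolding Kset_def T(2) mem_Collect_eq c1 using n by blast
  qed
  show "Kset \<subseteq> chi ` NTrees"
  proof
    fix h assume h: "h \<in> Kset"
    define T where "T = {p. h p = 1}"
    have h01: "\<And>p. h p = 0 \<or> h p = 1" using h unfolding Kset_def by blast
    have c1: "h p = 1 \<longleftrightarrow> p \<in> T" "h p = 0 \<longleftrightarrow> p \<notin> T" for p
      unfolding T_def using h01[of p] by auto
    have "h = chi T"
    proof
      fix p show "h p = chi T p" unfolding chi_def using c1[of p] by auto
    qed
    moreover have "T \<in> NTrees"
      using h unfolding Kset_def NTrees_def normal_tree_def mem_Collect_eq c1 by blast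
    ultimately show "h \<in> chi ` NTrees" by blast
  qed
qed

lemma closed_Kset: "closed Kset"
  unfolding Kset_def
  by (intro closed_Collect_conj closed_Collect_all closed_Collect_disj closed_Collect_eq
      continuous_on_product_coordinates continuous_on_const closed_Collect_const)

lemma second_countable_euclidean: "second_countable (euclidean :: 'a::second_countable_topology topology)"
proof -
  obtain B :: "'a set set" where B: "countable B" "\<And>C. C \<in> B \<Longrightarrow> open C"
    "\<And>S. open S \<Longrightarrow> \<exists>U. U \<subseteq> B \<and> S = \<Union>U"
    using univ_second_countable by blast
  show ?thesis
    unfolding second_countable_def
  proof (intro exI[of _ B] conjI ballI allI impI)
    show "countable B" by (rule B(1))
    fix V assume "V \<in> B" then show "openin euclidean V" using B(2) by simp
  next
    fix U :: "'a set" and x assume "openin euclidean U \<and> x \<in> U"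
    then obtain W where "W \<subseteq> B" "U = \<Union>W" "x \<in> U" using B(3) by auto
    then show "\<exists>V\<in>B. x \<in> V \<and> V \<subseteq> U" by auto
  qed
qed

lemma standard_borel_Tspace: "standard_borel Tspace"
proof -
  define X where "X = pullback_topology NTrees chi euclidean"
  have topX: "topspace X = NTrees" unfolding X_def topspace_pullback_topology by simp
  have openX: "openin X S \<longleftrightarrow> (\<exists>V. open V \<and> S = chi -` V \<inter> NTrees)" for S
    unfolding X_def openin_pullback_topology by simp
  define Y where "Y = subtopology (euclidean :: ((bool list \<times> nat list) \<Rightarrow> real) topology) Kset"
  have hom: "homeomorphic_map X Y chi"
    unfolding homeomorphic_map_def quotient_map_def
  proof (intro conjI allI impI)
    show "chi ` topspace X = topspace Y" unfolding topX Y_def Kset_eq by simp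
    show "inj_on chi (topspace X)" by (rule inj_onI) (rule chi_inj)
    fix U assume U: "U \<subseteq> topspace Y"
    then have UK: "U \<subseteq> chi ` NTrees" unfolding Y_def Kset_eq by simp
    show "openin X {x \<in> topspace X. chi x \<in> U} = openin Y U"
    proof
      assume "openin X {x \<in> topspace X. chi x \<in> U}"
      then obtain V where V: "open V" "{x \<in> NTrees. chi x \<in> U} = chi -` V \<inter> NTrees"
        unfolding openX topX by auto
      have "U = V \<inter> Kset"
      proof
        show "U \<subseteq> V \<inter> Kset"
        proof
          fix h assume "h \<in> U"
          then obtain T where "T \<in> NTrees" "h = chi T" using UK by auto
          then show "h \<in> V \<inter> Kset" using V(2) \<open>h \<in> U\<close> Kset_eq by blast
        qed
        show "V \<inter> Kset \<subseteq> U"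
        proof
          fix h assume "h \<in> V \<inter> Kset"
          then obtain T where "T \<in> NTrees" "h = chi T" "h \<in> V" unfolding Kset_eq[symmetric] by auto
          then show "h \<in> U" using V(2) by blast
        qed
      qed
      then show "openin Y U" unfolding Y_def openin_subtopology using V(1) by auto
    next
      assume "openin Y U"
      then obtain V where V: "open V" "U = V \<inter> Kset" unfolding Y_def openin_subtopology by auto
      have "{x \<in> topspace X. chi x \<in> U} = chi -` V \<inter> NTrees"
        unfolding topX V(2) Kset_eq[symmetric] by auto
      then show "openin X {x \<in> topspace X. chi x \<in> U}" unfolding openX using V(1) by blast
    qed
  qed
  then have homsp: "X homeomorphic_space Y" by (rule homeomorphic_map_imp_homeomorphic_space)
  have "completely_metrizable_space Y"
    unfolding Y_def
    by (rule completely_metrizable_space_closedin[OF completely_metrizable_space_euclidean])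
       (use closed_Kset closed_closedin in blast)
  then have cm: "completely_metrizable_space X" using homeomorphic_completely_metrizable_space[OF homsp] by blast
  have "second_countable Y" unfolding Y_def
    by (rule second_countable_subtopology[OF second_countable_euclidean])
  then have "second_countable X" using homeomorphic_space_second_countability[OF homsp] by blast
  then have sep: "separable_space X" by (rule second_countable_imp_separable_space)
  have chi_meas: "chi \<in> borel_measurable Tspace"
  proof (rule measurable_coordinatewise_then_product)
    fix p
    show "(\<lambda>T. chi T p) \<in> borel_measurable Tspace"
      unfolding chi_def by (intro measurable_If measurable_const Tspace_gen) auto
  qed
  have "sigma_sets NTrees {U. openin X U} = sets Tspace"
  proof
    show "sigma_sets NTrees {U. openin X U} \<subseteq> sets Tspace"
    proof (rule sets.sigma_sets_subset')
      show "{U. openin X U} \<subseteq> sets Tspace"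
      proof
        fix S assume "S \<in> {U. openin X U}"
        then obtain V where V: "open V" "S = chi -` V \<inter> NTrees" unfolding openX by auto
        show "S \<in> sets Tspace"
          unfolding V(2) space_Tspace[symmetric] by (rule measurable_sets[OF chi_meas borel_open[OF V(1)]])
      qed
      show "NTrees \<in> sets Tspace" using sets.top[of Tspace] unfolding space_Tspace .
    qed
    show "sets Tspace \<subseteq> sigma_sets NTrees {U. openin X U}"
      unfolding sets_Tspace
    proof (rule sigma_sets_mono')
      show "{{T \<in> NTrees. p \<in> T} |p. True} \<subseteq> {U. openin X U}"
      proof safe
        fix p
        have "{T \<in> NTrees. p \<in> T} = chi -` {h. 1/2 < h p} \<inter> NTrees"
          unfolding chi_def by auto
        moreover have "open {h :: (bool list \<times> nat list) \<Rightarrow> real. 1/2 < h p}"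
          by (intro open_Collect_less continuous_on_const continuous_on_product_coordinates)
        ultimately show "openin X {T \<in> NTrees. p \<in> T}" unfolding openX by blast
      qed
    qed
  qed
  then have S: "sets Tspace = sigma_sets (space Tspace) {U. openin X U}" unfolding space_Tspace by simp
  have "completely_metrizable_space X \<and> separable_space X \<and> topspace X = space Tspace \<and>
      sets Tspace = sigma_sets (space Tspace) {U. openin X U}"
    using cm sep topX space_Tspace S by blast
  then show ?thesis unfolding standard_borel_def by blast
qed


lemma coord_cs[measurable]: "(\<lambda>\<beta>::nat \<Rightarrow> nat. \<beta> k) \<in> measurable borel (count_space UNIV)"
proof -
  have m: "(\<lambda>\<beta>::nat \<Rightarrow> nat. \<beta> k) \<in> borel_measurable borel"
    by (intro borel_measurable_continuous_onI continuous_on_product_coordinates)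
  show ?thesis
    unfolding measurable_count_space_eq2_countable
  proof (intro conjI ballI)
    fix a :: nat
    show "(\<lambda>\<beta>. \<beta> k) -` {a} \<inter> space borel \<in> sets borel"
      by (rule measurable_sets[OF m]) (simp add: borel_closed)
  qed auto
qed

definition code :: "nat \<Rightarrow> bool list \<times> nat list \<Rightarrow> nat" where
  "code i p = prod_encode (i, to_nat p)"

definition dec :: "nat \<Rightarrow> (nat \<Rightarrow> nat) \<Rightarrow> tree" where
  "dec i \<beta> = {p. \<beta> (code i p) \<noteq> 0}"

definition Lrel :: "tree \<Rightarrow> tree \<Rightarrow> (nat \<Rightarrow> nat) \<Rightarrow> bool" where
  "Lrel S T \<alpha> \<longleftrightarrow> (\<forall>u s. (u, s) \<in> S \<longrightarrow> (u, seq_add s (restr \<alpha> (length s))) \<in> T)"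

lemma Lrel_alt: "Lrel S T \<alpha> \<longleftrightarrow> (\<forall>u s l. (u, s) \<in> S \<longrightarrow> length l = length s \<longrightarrow>
    (\<forall>j<length s. \<alpha> j = l ! j) \<longrightarrow> (u, seq_add s l) \<in> T)"
proof
  assume L: "Lrel S T \<alpha>"
  show "\<forall>u s l. (u, s) \<in> S \<longrightarrow> length l = length s \<longrightarrow>
    (\<forall>j<length s. \<alpha> j = l ! j) \<longrightarrow> (u, seq_add s l) \<in> T"
  proof (intro allI impI)
    fix u s l assume us: "(u, s) \<in> S" and l: "length l = length s" "\<forall>j<length s. \<alpha> j = l ! j"
    have "restr \<alpha> (length s) = l" using l by (intro nth_equalityI) auto
    then show "(u, seq_add s l) \<in> T" using L us unfolding Lrel_def by metis
  qed
next
  assume "\<forall>u s l. (u, s) \<in> S \<longrightarrow> length l = length s \<longrightarrow>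
    (\<forall>j<length s. \<alpha> j = l ! j) \<longrightarrow> (u, seq_add s l) \<in> T"
  then show "Lrel S T \<alpha>" unfolding Lrel_def by (metis length_restr nth_restr)
qed

lemma pred_Lrel: "Measurable.pred borel (\<lambda>\<beta>. Lrel (dec i \<beta>) (dec j \<beta>) (\<lambda>m. \<beta> (prod_encode (k, m))))"
  unfolding Lrel_alt dec_def mem_Collect_eq by measurable

lemma pred_normal: "Measurable.pred borel (\<lambda>\<beta>. normal_tree (dec i \<beta>))"
  unfolding normal_tree_def dec_def mem_Collect_eq by measurable

definition S0 :: tree where "S0 = {([], [])}"

lemma S0_normal: "S0 \<in> NTrees"
  unfolding S0_def NTrees_def normal_tree_def seq_le_def by auto

lemma meas_ifdec:
  assumes C: "Measurable.pred borel C" and N: "\<And>\<beta>. C \<beta> \<Longrightarrow> normal_tree (dec i \<beta>)"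
  shows "(\<lambda>\<beta>. if C \<beta> then dec i \<beta> else S0) \<in> measurable borel Tspace"
  unfolding Tspace_def
proof (rule measurable_measure_of)
  show "{{T \<in> NTrees. p \<in> T} |p. True} \<subseteq> Pow NTrees" by auto
  show "(\<lambda>\<beta>. if C \<beta> then dec i \<beta> else S0) \<in> space borel \<rightarrow> NTrees"
    using N S0_normal unfolding NTrees_def by auto
  fix Y assume "Y \<in> {{T \<in> NTrees. p \<in> T} |p. True}"
  then obtain p where Y: "Y = {T \<in> NTrees. p \<in> T}" by auto
  have eq: "(\<lambda>\<beta>. if C \<beta> then dec i \<beta> else S0) -` Y \<inter> space borel =
      {\<beta> \<in> space borel. if C \<beta> then \<beta> (code i p) \<noteq> 0 else p \<in> S0}"
    unfolding Y using N S0_normal unfolding NTrees_def dec_def by auto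
  have [measurable]: "Measurable.pred borel C" by (rule C)
  show "(\<lambda>\<beta>. if C \<beta> then dec i \<beta> else S0) -` Y \<inter> space borel \<in> sets borel"
    unfolding eq by measurable
qed

lemma analytic_gen:
  fixes Q :: "tree \<Rightarrow> tree \<Rightarrow> (nat \<Rightarrow> nat) \<Rightarrow> (nat \<Rightarrow> nat) \<Rightarrow> bool" and Rel
  assumes Qm: "Measurable.pred borel (\<lambda>\<beta>. Q (dec 0 \<beta>) (dec 1 \<beta>) (\<lambda>m. \<beta> (prod_encode (2, m))) (\<lambda>m. \<beta> (prod_encode (3, m))))"
    and RQ: "\<And>S T. S \<in> NTrees \<Longrightarrow> T \<in> NTrees \<Longrightarrow> Rel S T \<longleftrightarrow> (\<exists>\<alpha> \<alpha>'. Q S T \<alpha> \<alpha>')"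
    and R0: "Rel S0 S0"
  shows "analytic_rel Tspace Rel"
proof -
  define C where "C \<beta> \<longleftrightarrow> normal_tree (dec 0 \<beta>) \<and> normal_tree (dec 1 \<beta>) \<and>
     Q (dec 0 \<beta>) (dec 1 \<beta>) (\<lambda>m. \<beta> (prod_encode (2, m))) (\<lambda>m. \<beta> (prod_encode (3, m)))" for \<beta>
  have [measurable]: "Measurable.pred borel (\<lambda>\<beta>. normal_tree (dec i \<beta>))" for i by (rule pred_normal)
  have [measurable]: "Measurable.pred borel (\<lambda>\<beta>. Q (dec 0 \<beta>) (dec 1 \<beta>) (\<lambda>m. \<beta> (prod_encode (2, m))) (\<lambda>m. \<beta> (prod_encode (3, m))))"
    by (rule Qm)
  have Cm: "Measurable.pred borel C" unfolding C_def by measurable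
  define G where "G \<beta> = (if C \<beta> then (dec 0 \<beta>, dec 1 \<beta>) else (S0, S0))" for \<beta>
  have m0: "(\<lambda>\<beta>. if C \<beta> then dec 0 \<beta> else S0) \<in> measurable borel Tspace"
    by (rule meas_ifdec[OF Cm]) (simp add: C_def)
  have m1: "(\<lambda>\<beta>. if C \<beta> then dec 1 \<beta> else S0) \<in> measurable borel Tspace"
    by (rule meas_ifdec[OF Cm]) (simp add: C_def)
  have "(\<lambda>\<beta>. fst (G \<beta>)) = (\<lambda>\<beta>. if C \<beta> then dec 0 \<beta> else S0)"
    "(\<lambda>\<beta>. snd (G \<beta>)) = (\<lambda>\<beta>. if C \<beta> then dec 1 \<beta> else S0)"
    unfolding G_def by (auto simp: fun_eq_iff)
  then have "(\<lambda>\<beta>. fst (G \<beta>)) \<in> measurable borel Tspace" "(\<lambda>\<beta>. snd (G \<beta>)) \<in> measurable borel Tspace"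
    using m0 m1 by auto
  then have Gm: "G \<in> measurable borel (Tspace \<Otimes>\<^sub>M Tspace)"
    by (intro measurable_pair) (auto simp: comp_def)
  have "range G = rel_graph Tspace Rel"
  proof
    show "range G \<subseteq> rel_graph Tspace Rel"
    proof
      fix x assume "x \<in> range G"
      then obtain \<beta> where x: "x = G \<beta>" by auto
      show "x \<in> rel_graph Tspace Rel"
      proof (cases "C \<beta>")
        case True
        then show ?thesis unfolding x G_def rel_graph_def space_Tspace using RQ unfolding C_def NTrees_def by auto
      next
        case False
        then show ?thesis unfolding x G_def rel_graph_def space_Tspace using R0 S0_normal by auto
      qed
    qed
    show "rel_graph Tspace Rel \<subseteq> range G"
    proof
      fix x assume "x \<in> rel_graph Tspace Rel"
      then obtain S T where x: "x = (S, T)" "S \<in> NTrees" "T \<in> NTrees" "Rel S T"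
        unfolding rel_graph_def space_Tspace by auto
      then obtain \<alpha> \<alpha>' where Q: "Q S T \<alpha> \<alpha>'" using RQ by blast
      define \<beta> where "\<beta> p = (case prod_decode p of (i, c) \<Rightarrow>
          if i = 0 then (if \<exists>q\<in>S. to_nat q = c then 1 else 0)
          else if i = 1 then (if \<exists>q\<in>T. to_nat q = c then 1 else 0)
          else if i = 2 then \<alpha> c else if i = 3 then \<alpha>' c else 0)" for p
      have d0: "dec 0 \<beta> = S" unfolding dec_def code_def \<beta>_def by auto
      have d1: "dec 1 \<beta> = T" unfolding dec_def code_def \<beta>_def by auto
      have a2: "(\<lambda>m. \<beta> (prod_encode (2, m))) = \<alpha>" unfolding \<beta>_def by auto
      have a3: "(\<lambda>m. \<beta> (prod_encode (3, m))) = \<alpha>'" unfolding \<beta>_def by auto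
      have "C \<beta>" unfolding C_def d0 d1 a2 a3 using x Q unfolding NTrees_def by auto
      then have "G \<beta> = x" unfolding G_def d0 d1 x by simp
      then show "x \<in> range G" by (metis rangeI)
    qed
  qed
  moreover have "rel_graph Tspace Rel \<subseteq> space (Tspace \<Otimes>\<^sub>M Tspace)"
    unfolding rel_graph_def space_pair_measure by auto
  ultimately show ?thesis
    unfolding analytic_rel_def analytic_set_def using Gm by blast
qed

lemma le_S_Lrel: "le_S S T \<longleftrightarrow> (\<exists>\<alpha>. Lrel S T \<alpha>)"
  unfolding le_S_def Lrel_def by simp

lemma seq_add_0: "seq_add s (restr (\<lambda>_. 0) (length s)) = s"
  by (intro nth_equalityI) (auto simp: seq_add_def)

lemma Lrel_refl: "Lrel S S (\<lambda>_. 0)"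
  unfolding Lrel_def seq_add_0 by simp

lemma le_S_refl: "le_S S S"
  using Lrel_refl le_S_Lrel by blast

lemma analytic_le: "analytic_rel Tspace le_S"
  by (rule analytic_gen[where Q="\<lambda>S T \<alpha> \<alpha>'. Lrel S T \<alpha>"])
     (auto simp: pred_Lrel le_S_Lrel intro: Lrel_refl)

lemma analytic_eq: "analytic_rel Tspace eq_S"
proof (rule analytic_gen[where Q="\<lambda>S T \<alpha> \<alpha>'. Lrel S T \<alpha> \<and> Lrel T S \<alpha>'"])
  have [measurable]: "Measurable.pred borel (\<lambda>\<beta>. Lrel (dec i \<beta>) (dec j \<beta>) (\<lambda>m. \<beta> (prod_encode (k, m))))" for i j k
    by (rule pred_Lrel)
  show "Measurable.pred borel (\<lambda>\<beta>. Lrel (dec 0 \<beta>) (dec 1 \<beta>) (\<lambda>m. \<beta> (prod_encode (2, m))) \<and>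
      Lrel (dec 1 \<beta>) (dec 0 \<beta>) (\<lambda>m. \<beta> (prod_encode (3, m))))" by measurable
qed (auto simp: eq_S_def le_S_Lrel intro: Lrel_refl)


lemma seq_add_restr_assoc:
  "seq_add (seq_add s (restr \<alpha> (length s))) (restr \<alpha>' (length s)) = seq_add s (restr (\<lambda>m. \<alpha> m + \<alpha>' m) (length s))"
  by (intro nth_equalityI) (auto simp: seq_add_def)

lemma le_S_trans: "le_S S T \<Longrightarrow> le_S T U \<Longrightarrow> le_S S U"
proof -
  assume "le_S S T" "le_S T U"
  then obtain \<alpha> \<alpha>' where a: "\<And>u s. (u, s) \<in> S \<Longrightarrow> (u, seq_add s (restr \<alpha> (length s))) \<in> T"
    and a': "\<And>u s. (u, s) \<in> T \<Longrightarrow> (u, seq_add s (restr \<alpha>' (length s))) \<in> U"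
    unfolding le_S_def by blast
  show "le_S S U"
    unfolding le_S_def
  proof (intro exI allI impI)
    fix u s assume "(u, s) \<in> S"
    from a'[OF a[OF this]] show "(u, seq_add s (restr (\<lambda>m. \<alpha> m + \<alpha>' m) (length s))) \<in> U"
      by (simp add: seq_add_restr_assoc)
  qed
qed

lemma le_S_A: "le_S S T \<Longrightarrow> A_of S \<subseteq> A_of T"
proof
  fix a assume "le_S S T" "a \<in> A_of S"
  then obtain \<gamma> \<beta> where g: "\<And>u s. (u, s) \<in> S \<Longrightarrow> (u, seq_add s (restr \<gamma> (length s))) \<in> T"
    and b: "\<And>n. (restr a n, restr \<beta> n) \<in> S"
    unfolding le_S_def A_of_def by blast
  have "(restr a n, restr (\<lambda>m. \<beta> m + \<gamma> m) n) \<in> T" for n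
  proof -
    have "seq_add (restr \<beta> n) (restr \<gamma> n) = restr (\<lambda>m. \<beta> m + \<gamma> m) n"
      by (intro nth_equalityI) (auto simp: seq_add_def)
    then show ?thesis using g[OF b[of n]] by simp
  qed
  then show "a \<in> A_of T" unfolding A_of_def by blast
qed

lemma qo_Tspace: "quasiorder_on (space Tspace) le_S"
  unfolding quasiorder_on_def using le_S_refl le_S_trans by blast

lemma eq_Tspace: "equivalence_on (space Tspace) eq_S"
  unfolding equivalence_on_def quasiorder_on_def eq_S_def using le_S_refl le_S_trans by blast

lemma id_meas: "(\<lambda>x. x) \<in> measurable Tspace Tspace" by simp

lemma qo_a: "complete_a C_qo le_S nsub_S"
  unfolding complete_a_def
proof (intro allI impI)
  fix M :: "'a measure" and R assume "C_qo M R"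
  then have sb: "standard_borel M" and qo: "quasiorder_on (space M) R" and an: "analytic_rel M R"
    unfolding C_qo_def by auto
  obtain f e where f: "f \<in> measurable M Tspace" "inj_on e (space M)"
    "\<forall>x\<in>space M. \<forall>y\<in>space M. R x y \<longrightarrow> le_S (f x) (f y)"
    "\<forall>x\<in>space M. A_of (f x) = e ` {z \<in> space M. R z x}"
    using main_qo[OF sb qo an] by blast
  have refl: "\<And>x. x \<in> space M \<Longrightarrow> R x x" using qo unfolding quasiorder_on_def by blast
  have "nsub_S (f x) (f y)" if xy: "x \<in> space M" "y \<in> space M" "\<not> R x y" for x y
  proof -
    have "e x \<in> A_of (f x)" using f(4) xy refl by auto
    moreover have "e x \<notin> A_of (f y)"
    proof
      assume "e x \<in> A_of (f y)"
      then obtain z where "z \<in> space M" "R z y" "e x = e z" using f(4) xy by auto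
      then show False using f(2) xy unfolding inj_on_def by metis
    qed
    ultimately show ?thesis unfolding nsub_S_def by blast
  qed
  then show "\<exists>f. borel_hom M R (\<lambda>x y. \<not> R x y) Tspace le_S nsub_S f"
    unfolding borel_hom_def using f by blast
qed

lemma qo_b: "complete_b C_qo le_S nsub_S"
  unfolding complete_b_def
proof (intro exI conjI)
  show "C_qo Tspace le_S" unfolding C_qo_def using standard_borel_Tspace qo_Tspace analytic_le by blast
  show "borel_hom Tspace le_S nsub_S Tspace le_S (\<lambda>x y. \<not> le_S x y) (\<lambda>x. x)"
    unfolding borel_hom_def nsub_S_def using le_S_A by auto
qed

lemma eq_main:
  fixes M :: "'a measure"
  assumes "C_eq M R"
  shows "\<exists>f. f \<in> measurable M Tspace \<and> (\<forall>x\<in>space M. \<forall>y\<in>space M.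
     (R x y \<longrightarrow> eq_S (f x) (f y)) \<and> (\<not> R x y \<longrightarrow> disj_S (f x) (f y)))"
proof -
  have sb: "standard_borel M" and eqv: "equivalence_on (space M) R" and an: "analytic_rel M R"
    using assms unfolding C_eq_def by auto
  have qo: "quasiorder_on (space M) R" using eqv unfolding equivalence_on_def by blast
  have refl: "\<And>x. x \<in> space M \<Longrightarrow> R x x" using qo unfolding quasiorder_on_def by blast
  have trans: "\<And>x y z. x \<in> space M \<Longrightarrow> y \<in> space M \<Longrightarrow> z \<in> space M \<Longrightarrow> R x y \<Longrightarrow> R y z \<Longrightarrow> R x z"
    using qo unfolding quasiorder_on_def by blast
  have sym: "\<And>x y. x \<in> space M \<Longrightarrow> y \<in> space M \<Longrightarrow> R x y \<Longrightarrow> R y x"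
    using eqv unfolding equivalence_on_def by blast
  obtain f e where f: "f \<in> measurable M Tspace" "inj_on e (space M)"
    "\<forall>x\<in>space M. \<forall>y\<in>space M. R x y \<longrightarrow> le_S (f x) (f y)"
    "\<forall>x\<in>space M. A_of (f x) = e ` {z \<in> space M. R z x}"
    using main_qo[OF sb qo an] by blast
  have "(R x y \<longrightarrow> eq_S (f x) (f y)) \<and> (\<not> R x y \<longrightarrow> disj_S (f x) (f y))"
    if xy: "x \<in> space M" "y \<in> space M" for x y
  proof (intro conjI impI)
    assume "R x y"
    then show "eq_S (f x) (f y)" unfolding eq_S_def using f(3) sym xy by blast
  next
    assume nR: "\<not> R x y"
    have "e x \<in> A_of (f x)" "e y \<in> A_of (f y)" using f(4) xy refl by auto
    moreover have "A_of (f x) \<inter> A_of (f y) = {}"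
    proof (rule ccontr)
      assume "A_of (f x) \<inter> A_of (f y) \<noteq> {}"
      then obtain z1 z2 where z: "z1 \<in> space M" "R z1 x" "z2 \<in> space M" "R z2 y" "e z1 = e z2"
        using f(4) xy by fastforce
      then have "z1 = z2" using f(2) unfolding inj_on_def by blast
      then have "R x z2" using sym z xy by blast
      then have "R x y" using trans z xy by blast
      then show False using nR by blast
    qed
    ultimately show "disj_S (f x) (f y)" unfolding disj_S_def by blast
  qed
  then show ?thesis using f(1) by blast
qed

lemma eq_a: "complete_a C_eq eq_S disj_S"
  unfolding complete_a_def borel_hom_def using eq_main by blast

lemma eq_a': "complete_a C_eq eq_S neq_S"
  unfolding complete_a_def borel_hom_def
proof (intro allI impI)
  fix M :: "'a measure" and R assume "C_eq M R"
  then obtain f where f: "f \<in> measurable M Tspace" "\<forall>x\<in>space M. \<forall>y\<in>space M.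
     (R x y \<longrightarrow> eq_S (f x) (f y)) \<and> (\<not> R x y \<longrightarrow> disj_S (f x) (f y))"
    using eq_main by blast
  have "disj_S S T \<Longrightarrow> neq_S S T" for S T unfolding disj_S_def neq_S_def by auto
  then show "\<exists>f. f \<in> M \<rightarrow>\<^sub>M Tspace \<and> (\<forall>x\<in>space M. \<forall>y\<in>space M.
      (R x y \<longrightarrow> eq_S (f x) (f y)) \<and> (\<not> R x y \<longrightarrow> neq_S (f x) (f y)))"
    using f by blast
qed

lemma eq_S_A: "eq_S S T \<Longrightarrow> A_of S = A_of T"
  unfolding eq_S_def using le_S_A by blast

lemma eq_b: "complete_b C_eq eq_S disj_S"
  unfolding complete_b_def
proof (intro exI conjI)
  show "C_eq Tspace eq_S" unfolding C_eq_def using standard_borel_Tspace eq_Tspace analytic_eq by blast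
  show "borel_hom Tspace eq_S disj_S Tspace eq_S (\<lambda>x y. \<not> eq_S x y) (\<lambda>x. x)"
    unfolding borel_hom_def disj_S_def using eq_S_A by auto
qed

lemma eq_b': "complete_b C_eq eq_S neq_S"
  unfolding complete_b_def
proof (intro exI conjI)
  show "C_eq Tspace eq_S" unfolding C_eq_def using standard_borel_Tspace eq_Tspace analytic_eq by blast
  show "borel_hom Tspace eq_S neq_S Tspace eq_S (\<lambda>x y. \<not> eq_S x y) (\<lambda>x. x)"
    unfolding borel_hom_def neq_S_def using eq_S_A by auto
qed

theorem mainTheorem1:
  shows "(complete_a (C_qo :: 'a measure \<Rightarrow> _) le_S nsub_S \<and> complete_b C_qo le_S nsub_S)
       \<and> (complete_a (C_eq :: 'b measure \<Rightarrow> _) eq_S disj_S \<and> complete_b C_eq eq_S disj_S)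
       \<and> (complete_a (C_eq :: 'c measure \<Rightarrow> _) eq_S neq_S \<and> complete_b C_eq eq_S neq_S)"
  using qo_a qo_b eq_a eq_b eq_a' eq_b' by blast


end
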